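(* Let $\mathcal{O}_K$ be a discrete valuation ring with fraction field $K$ and valuation $v_K$, let $L/K$ be a finite separable extension of degree $n$ with a Hopf Galois structure $(H,\langle\,,\rangle)$, let $W$ be a $K$-basis of $H$ and $B=\{\gamma_j\}_{j=1}^n$ an $\mathcal{O}_K$-basis of $\mathcal{O}_L$. Let $\beta\in\mathcal{O}_L$. Then $\beta$ is a free generator of $\mathcal{O}_L$ as $\mathfrak{A}_H$-module (i.e. the map $\mathfrak{A}_H\to\mathcal{O}_L$, $h\mapsto\langle h,\beta\rangle$, is a bijection) if and only if $$v_K\big(\det M_\beta(H_W,L_B)\big)=I_W(H,L).$$
   Context: A Hopf Galois structure on $L/K$ is a $K$-Hopf algebra $H$ with a $K$-linear action $\langle\,,\rangle\colon H\otimes_K L\to L$ making $L$ an $H$-module algebra such that $L\otimes_K H\to\mathrm{End}_K(L)$ is bijective. The associated order is $\mathfrak{A}_H=\{h\in H:\langle h,x\rangle\in\mathcal{O}_L\ \forall x\in\mathcal{O}_L\}$. With $W=\{w_i\}$, write $\langle w_i,\gamma_j\rangle=\sum_k m_{ij}^{(k)}\gamma_k$; the matrix of the action $M(H_W,L_B)\in\mathcal{M}_{n^2\times n}(K)$ has entry $m_{ij}^{(k)}$ in row $n(j-1)+k$, column $i$. A reduced matrix of it is $D\in\mathrm{GL}_n(K)$ such that $U M(H_W,L_B)=\begin{pmatrix}D\\0\end{pmatrix}$ for some $U\in\mathrm{GL}_{n^2}(\mathcal{O}_K)$; such $D$ exists, and the index $I_W(H,L):=v_K(\det D)$ does not depend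 on the choice of $D$. For $\beta\in L$, $M_\beta(H_W,L_B)\in\mathcal{M}_n(K)$ is the matrix of the $K$-linear map $H\to L$, $h\mapsto\langle h,\beta\rangle$, with respect to the bases $W$ and $B$. *)

theory Defs
  imports "Jordan_Normal_Form.Determinant" "HOL-Computational_Algebra.Polynomial"
    "HOL-Library.Extended_Real"
begin

definition discrete_valuation :: "('k::field \<Rightarrow> ereal) \<Rightarrow> bool" where
  "discrete_valuation v \<longleftrightarrow>
     (\<forall>x. v x = \<infinity> \<longleftrightarrow> x = 0) \<and>
     (\<forall>x. x \<noteq> 0 \<longrightarrow> (\<exists>z::int. v x = ereal (real_of_int z))) \<and>
     (\<forall>x y. v (x * y) = v x + v y) \<and>
     (\<forall>x y. min (v x) (v y) \<le> v (x + y)) \<and>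
     (\<exists>p. v p = 1)"

definition val_ring :: "('k::field \<Rightarrow> ereal) \<Rightarrow> 'k set" where
  "val_ring v = {x. 0 \<le> v x}"

definition K_embedding :: "('k::field \<Rightarrow> 'l::field) \<Rightarrow> bool" where
  "K_embedding \<iota> \<longleftrightarrow> \<iota> 1 = 1 \<and> (\<forall>a b. \<iota> (a + b) = \<iota> a + \<iota> b) \<and>
     (\<forall>a b. \<iota> (a * b) = \<iota> a * \<iota> b)"

definition is_K_basis :: "('k::field \<Rightarrow> 'l::field) \<Rightarrow> nat \<Rightarrow> (nat \<Rightarrow> 'l) \<Rightarrow> bool" where
  "is_K_basis \<iota> n e \<longleftrightarrow>
     (\<forall>x. \<exists>!c. (\<forall>j\<ge>n. c j = 0) \<and> x = (\<Sum>j<n. \<iota> (c j) * e j))"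

definition ext_degree_eq :: "('k::field \<Rightarrow> 'l::field) \<Rightarrow> nat \<Rightarrow> bool" where
  "ext_degree_eq \<iota> n \<longleftrightarrow> (\<exists>e. is_K_basis \<iota> n e)"

definition separable_ext :: "('k::field \<Rightarrow> 'l::field) \<Rightarrow> bool" where
  "separable_ext \<iota> \<longleftrightarrow>
     (\<forall>x. \<exists>p::'k poly. p \<noteq> 0 \<and> coprime p (pderiv p) \<and> poly (map_poly \<iota> p) x = 0)"

definition int_closure :: "('k::field \<Rightarrow> ereal) \<Rightarrow> ('k \<Rightarrow> 'l::field) \<Rightarrow> 'l set" where
  "int_closure v \<iota> = {x. \<exists>p::'k poly. lead_coeff p = 1 \<and>
       (\<forall>i. coeff p i \<in> val_ring v) \<and> poly (map_poly \<iota> p) x = 0}"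

definition is_integral_basis ::
  "('k::field \<Rightarrow> ereal) \<Rightarrow> ('k \<Rightarrow> 'l::field) \<Rightarrow> nat \<Rightarrow> (nat \<Rightarrow> 'l) \<Rightarrow> bool" where
  "is_integral_basis v \<iota> n \<gamma> \<longleftrightarrow>
     (\<forall>j<n. \<gamma> j \<in> int_closure v \<iota>) \<and>
     (\<forall>c. (\<forall>j<n. c j \<in> val_ring v) \<longrightarrow> (\<Sum>j<n. \<iota> (c j) * \<gamma> j) = 0 \<longrightarrow> (\<forall>j<n. c j = 0)) \<and>
     int_closure v \<iota> \<subseteq> {(\<Sum>j<n. \<iota> (c j) * \<gamma> j) | c. \<forall>j<n. c j \<in> val_ring v}"

definition coordB :: "('k::field \<Rightarrow> 'l::field) \<Rightarrow> nat \<Rightarrow> (nat \<Rightarrow> 'l) \<Rightarrow> 'l \<Rightarrow> nat \<Rightarrow> 'k" where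
  "coordB \<iota> n \<gamma> x = (THE c. (\<forall>j\<ge>n. c j = 0) \<and> x = (\<Sum>j<n. \<iota> (c j) * \<gamma> j))"

text \<open>H is identified with K^n via W. Structure constants:
  w_i w_j = sum_k mu i j k w_k;  1_H = sum_k u k w_k;
  Delta(w_k) = sum_(i,j) dl k i j (w_i tensor w_j);  epsilon(w_k) = eps k;
  S(w_k) = sum_l S k l w_l;  act i x = <w_i, x>.\<close>

definition hopf_algebra_coords ::
  "nat \<Rightarrow> (nat \<Rightarrow> nat \<Rightarrow> nat \<Rightarrow> 'k::field) \<Rightarrow> (nat \<Rightarrow> 'k) \<Rightarrow> (nat \<Rightarrow> nat \<Rightarrow> nat \<Rightarrow> 'k)
     \<Rightarrow> (nat \<Rightarrow> 'k) \<Rightarrow> (nat \<Rightarrow> nat \<Rightarrow> 'k) \<Rightarrow> bool" where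
  "hopf_algebra_coords n mu u dl eps S \<longleftrightarrow>
    \<comment> \<open>associativity\<close>
    (\<forall>i<n. \<forall>j<n. \<forall>l<n. \<forall>k<n.
       (\<Sum>p<n. mu i j p * mu p l k) = (\<Sum>p<n. mu j l p * mu i p k)) \<and>
    \<comment> \<open>unit\<close>
    (\<forall>i<n. \<forall>k<n. (\<Sum>p<n. u p * mu p i k) = (if i = k then 1 else 0) \<and>
                  (\<Sum>p<n. u p * mu i p k) = (if i = k then 1 else 0)) \<and>
    \<comment> \<open>coassociativity\<close>
    (\<forall>k<n. \<forall>i<n. \<forall>j<n. \<forall>l<n.
       (\<Sum>p<n. dl k p l * dl p i j) = (\<Sum>p<n. dl k i p * dl p j l)) \<and>
    \<comment> \<open>counit\<close>
    (\<forall>k<n. \<forall>i<n. (\<Sum>p<n. eps p * dl k p i) = (if k = i then 1 else 0) \<and>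
                  (\<Sum>p<n. eps p * dl k i p) = (if k = i then 1 else 0)) \<and>
    \<comment> \<open>Delta is an algebra homomorphism\<close>
    (\<forall>i<n. \<forall>j<n. \<forall>a<n. \<forall>b<n.
       (\<Sum>p<n. mu i j p * dl p a b) =
       (\<Sum>a1<n. \<Sum>b1<n. \<Sum>a2<n. \<Sum>b2<n. dl i a1 b1 * dl j a2 b2 * mu a1 a2 a * mu b1 b2 b)) \<and>
    (\<forall>a<n. \<forall>b<n. (\<Sum>p<n. u p * dl p a b) = u a * u b) \<and>
    \<comment> \<open>epsilon is an algebra homomorphism\<close>
    (\<forall>i<n. \<forall>j<n. (\<Sum>p<n. mu i j p * eps p) = eps i * eps j) \<and>
    (\<Sum>p<n. u p * eps p) = 1 \<and>
    \<comment> \<open>antipode\<close>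
    (\<forall>k<n. \<forall>l<n.
       (\<Sum>a<n. \<Sum>b<n. dl k a b * (\<Sum>c<n. S a c * mu c b l)) = eps k * u l \<and>
       (\<Sum>a<n. \<Sum>b<n. dl k a b * (\<Sum>c<n. S b c * mu a c l)) = eps k * u l)"

definition K_linear_map :: "('k::field \<Rightarrow> 'l::field) \<Rightarrow> ('l \<Rightarrow> 'l) \<Rightarrow> bool" where
  "K_linear_map \<iota> f \<longleftrightarrow> (\<forall>x y. f (x + y) = f x + f y) \<and> (\<forall>c x. f (\<iota> c * x) = \<iota> c * f x)"

definition hopf_galois_coords ::
  "('k::field \<Rightarrow> 'l::field) \<Rightarrow> nat \<Rightarrow> (nat \<Rightarrow> nat \<Rightarrow> nat \<Rightarrow> 'k) \<Rightarrow> (nat \<Rightarrow> 'k)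
     \<Rightarrow> (nat \<Rightarrow> nat \<Rightarrow> nat \<Rightarrow> 'k) \<Rightarrow> (nat \<Rightarrow> 'k) \<Rightarrow> (nat \<Rightarrow> nat \<Rightarrow> 'k)
     \<Rightarrow> (nat \<Rightarrow> 'l \<Rightarrow> 'l) \<Rightarrow> bool" where
  "hopf_galois_coords \<iota> n mu u dl eps S act \<longleftrightarrow>
    hopf_algebra_coords n mu u dl eps S \<and>
    \<comment> \<open>K-linearity of the action in the L-argument\<close>
    (\<forall>i<n. K_linear_map \<iota> (act i)) \<and>
    \<comment> \<open>L is an H-module\<close>
    (\<forall>x. (\<Sum>p<n. \<iota> (u p) * act p x) = x) \<and>
    (\<forall>i<n. \<forall>j<n. \<forall>x. (\<Sum>p<n. \<iota> (mu i j p) * act p x) = act i (act j x)) \<and>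
    \<comment> \<open>L is an H-module algebra\<close>
    (\<forall>k<n. \<forall>x y. act k (x * y) = (\<Sum>a<n. \<Sum>b<n. \<iota> (dl k a b) * act a x * act b y)) \<and>
    (\<forall>k<n. act k 1 = \<iota> (eps k)) \<and>
    \<comment> \<open>L tensor_K H -> End_K(L) is bijective (L tensor H identified with L^n via W)\<close>
    bij_betw (\<lambda>x. \<lambda>y. \<Sum>i<n. x i * act i y) {x. \<forall>i\<ge>n. x i = 0} {f. K_linear_map \<iota> f}"

definition hact :: "('k::field \<Rightarrow> 'l::field) \<Rightarrow> nat \<Rightarrow> (nat \<Rightarrow> 'l \<Rightarrow> 'l) \<Rightarrow> (nat \<Rightarrow> 'k) \<Rightarrow> 'l \<Rightarrow> 'l" where
  "hact \<iota> n act a x = (\<Sum>i<n. \<iota> (a i) * act i x)"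

definition assoc_order ::
  "('k::field \<Rightarrow> ereal) \<Rightarrow> ('k \<Rightarrow> 'l::field) \<Rightarrow> nat \<Rightarrow> (nat \<Rightarrow> 'l \<Rightarrow> 'l) \<Rightarrow> (nat \<Rightarrow> 'k) set" where
  "assoc_order v \<iota> n act = {a. (\<forall>i\<ge>n. a i = 0) \<and>
      (\<forall>x\<in>int_closure v \<iota>. hact \<iota> n act a x \<in> int_closure v \<iota>)}"

text \<open>M(H_W, L_B): entry m_ij^(k) at row n*j+k, column i (0-based).\<close>
definition action_matrix ::
  "('k::field \<Rightarrow> 'l::field) \<Rightarrow> nat \<Rightarrow> (nat \<Rightarrow> 'l) \<Rightarrow> (nat \<Rightarrow> 'l \<Rightarrow> 'l) \<Rightarrow> 'k mat" where
  "action_matrix \<iota> n \<gamma> act =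
     mat (n * n) n (\<lambda>(r, i). coordB \<iota> n \<gamma> (act i (\<gamma> (r div n))) (r mod n))"

definition beta_matrix ::
  "('k::field \<Rightarrow> 'l::field) \<Rightarrow> nat \<Rightarrow> (nat \<Rightarrow> 'l) \<Rightarrow> (nat \<Rightarrow> 'l \<Rightarrow> 'l) \<Rightarrow> 'l \<Rightarrow> 'k mat" where
  "beta_matrix \<iota> n \<gamma> act \<beta> = mat n n (\<lambda>(k, i). coordB \<iota> n \<gamma> (act i \<beta>) k)"

definition entries_in :: "'a mat \<Rightarrow> 'a set \<Rightarrow> bool" where
  "entries_in A R \<longleftrightarrow> (\<forall>i<dim_row A. \<forall>j<dim_col A. A $$ (i, j) \<in> R)"

definition GL_over :: "nat \<Rightarrow> 'a::comm_ring_1 set \<Rightarrow> 'a mat \<Rightarrow> bool" where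
  "GL_over m R U \<longleftrightarrow> U \<in> carrier_mat m m \<and> entries_in U R \<and>
     (\<exists>V. V \<in> carrier_mat m m \<and> entries_in V R \<and> U * V = 1\<^sub>m m \<and> V * U = 1\<^sub>m m)"

definition is_reduced_matrix :: "('k::field \<Rightarrow> ereal) \<Rightarrow> nat \<Rightarrow> 'k mat \<Rightarrow> 'k mat \<Rightarrow> bool" where
  "is_reduced_matrix v n M D \<longleftrightarrow> D \<in> carrier_mat n n \<and> det D \<noteq> 0 \<and>
     (\<exists>U. GL_over (n * n) (val_ring v) U \<and> U * M = D @\<^sub>r 0\<^sub>m (n * n - n) n)"

text \<open>I_W(H,L) = v_K(det D) for a reduced matrix D (independent of the choice).\<close>
definition index_IW :: "('k::field \<Rightarrow> ereal) \<Rightarrow> nat \<Rightarrow> 'k mat \<Rightarrow> ereal" where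
  "index_IW v n M = v (det (SOME D. is_reduced_matrix v n M D))"

end

theory Submission
  imports Defs "Jordan_Normal_Form.Char_Poly"
begin



section \<open>Valuation basics\<close>

context fixes v :: "'k::field \<Rightarrow> ereal" assumes dv: "discrete_valuation v"
begin

lemma dv_inf: "v x = \<infinity> \<longleftrightarrow> x = 0" using dv unfolding discrete_valuation_def by blast
lemma dv_int: "x \<noteq> 0 \<Longrightarrow> \<exists>z::int. v x = ereal (real_of_int z)" using dv unfolding discrete_valuation_def by blast
lemma dv_mult: "v (x * y) = v x + v y" using dv unfolding discrete_valuation_def by blast
lemma dv_add: "min (v x) (v y) \<le> v (x + y)" using dv unfolding discrete_valuation_def by blast

lemma dv_fin: "x \<noteq> 0 \<Longrightarrow> \<bar>v x\<bar> \<noteq> \<infinity>" using dv_int[of x] by auto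

lemma dv_one: "v 1 = 0"
proof -
  obtain z where z: "v 1 = ereal (real_of_int z)" using dv_int[of 1] by auto
  have "v (1*1) = v 1 + v 1" by (rule dv_mult)
  then have "ereal z = ereal z + ereal z" using z by simp
  then show ?thesis using z by simp
qed

lemma dv_m1: "v (-1) = 0"
proof -
  obtain z where z: "v (-1) = ereal (real_of_int z)" using dv_int[of "-1"] by auto
  have "v ((-1)*(-1)) = v (-1) + v (-1)" by (rule dv_mult)
  then have "0 = ereal z + ereal z" using z dv_one by simp
  then show ?thesis using z by simp
qed

lemma dv_uminus: "v (- x) = v x"
  using dv_mult[of "-1" x] dv_m1 by simp

lemma dv_inv: "x \<noteq> 0 \<Longrightarrow> v (inverse x) = - v x"
proof -
  assume x: "x \<noteq> 0"
  obtain z where z: "v x = ereal (real_of_int z)" using dv_int[OF x] by auto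
  obtain w where w: "v (inverse x) = ereal (real_of_int w)" using dv_int[of "inverse x"] x by auto
  have "v (x * inverse x) = v x + v (inverse x)" by (rule dv_mult)
  then have "0 = ereal z + ereal w" using x dv_one z w by simp
  then have "w = - z" by simp
  then show ?thesis using z w by simp
qed

abbreviation "Ov \<equiv> val_ring v"

lemma O_iff: "x \<in> Ov \<longleftrightarrow> 0 \<le> v x" unfolding val_ring_def by simp
lemma O_0[simp]: "0 \<in> Ov" using dv_inf[of 0] by (simp add: O_iff)
lemma O_1[simp]: "1 \<in> Ov" using dv_one by (simp add: O_iff)
lemma O_add: "x \<in> Ov \<Longrightarrow> y \<in> Ov \<Longrightarrow> x + y \<in> Ov"
proof -
  assume "x \<in> Ov" "y \<in> Ov"
  then have "0 \<le> min (v x) (v y)" unfolding O_iff by simp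
  then show ?thesis unfolding O_iff using dv_add[of x y] by (rule order_trans)
qed
lemma O_mult: "x \<in> Ov \<Longrightarrow> y \<in> Ov \<Longrightarrow> x * y \<in> Ov"
  unfolding O_iff dv_mult by (rule add_nonneg_nonneg)
lemma O_uminus: "x \<in> Ov \<Longrightarrow> - x \<in> Ov" unfolding O_iff dv_uminus .
lemma O_diff: "x \<in> Ov \<Longrightarrow> y \<in> Ov \<Longrightarrow> x - y \<in> Ov"
  unfolding diff_conv_add_uminus by (intro O_add O_uminus)
lemma O_sum: "(\<And>i. i \<in> A \<Longrightarrow> f i \<in> Ov) \<Longrightarrow> sum f A \<in> Ov"
  by (induction A rule: infinite_finite_induct) (auto intro: O_add)
lemma O_prod: "(\<And>i. i \<in> A \<Longrightarrow> f i \<in> Ov) \<Longrightarrow> prod f A \<in> Ov"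
  by (induction A rule: infinite_finite_induct) (auto intro: O_mult)
lemma O_power: "x \<in> Ov \<Longrightarrow> x ^ k \<in> Ov"
  by (induction k) (auto intro: O_mult)
lemma O_signof: "signof p \<in> Ov" by (simp add: sign_def O_uminus)

lemma O_inv_unit: "x \<in> Ov \<Longrightarrow> x \<noteq> 0 \<Longrightarrow> (inverse x \<in> Ov \<longleftrightarrow> v x = 0)"
  using dv_inv[of x] by (auto simp: O_iff)

lemma O_div: "y \<noteq> 0 \<Longrightarrow> v y \<le> v x \<Longrightarrow> x / y \<in> Ov"
proof -
  assume y: "y \<noteq> 0" and le: "v y \<le> v x"
  show ?thesis
  proof (cases "x = 0")
    case True then show ?thesis by simp
  next
    case False
    obtain z where z: "v x = ereal (real_of_int z)" using dv_int[OF False] by auto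
    obtain w where w: "v y = ereal (real_of_int w)" using dv_int[OF y] by auto
    have "v (x / y) = v x + v (inverse y)" using dv_mult[of x "inverse y"] by (simp add: divide_inverse)
    also have "\<dots> = ereal (real_of_int z - real_of_int w)" using dv_inv[OF y] z w by simp
    finally show ?thesis using le z w by (simp add: O_iff)
  qed
qed

lemma O_clear: "\<exists>t. t \<in> Ov \<and> t \<noteq> 0 \<and> t * x \<in> Ov"
proof (cases "x \<in> Ov")
  case True then show ?thesis by (intro exI[of _ 1]) auto
next
  case False
  then have x: "x \<noteq> 0" by auto
  from False have "v x < 0" by (auto simp: O_iff)
  then have "inverse x \<in> Ov" using dv_inv[OF x] by (auto simp: O_iff)
  then show ?thesis using x by (intro exI[of _ "inverse x"]) auto
qed

lemma O_clear_many: "finite A \<Longrightarrow> \<exists>t. t \<in> Ov \<and> t \<noteq> 0 \<and> (\<forall>i\<in>A. t * f i \<in> Ov)"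
proof (induction A rule: finite_induct)
  case empty then show ?case by (intro exI[of _ 1]) auto
next
  case (insert a A)
  then obtain t where t: "t \<in> Ov" "t \<noteq> 0" "\<forall>i\<in>A. t * f i \<in> Ov" by auto
  obtain s where s: "s \<in> Ov" "s \<noteq> 0" "s * f a \<in> Ov" using O_clear by blast
  have "s * t * f i \<in> Ov" if "i \<in> A" for i
    using O_mult[OF s(1) t(3)[rule_format, OF that]] by (simp add: ac_simps)
  moreover have "s * t * f a \<in> Ov" using O_mult[OF t(1) s(3)] by (simp add: ac_simps)
  ultimately show ?case using s t by (intro exI[of _ "s*t"]) (auto intro: O_mult)
qed

end

section \<open>Determinants over subrings\<close>

lemma det_in_subring:
  fixes R :: "'a::comm_ring_1 set"
  assumes "0 \<in> R" "1 \<in> R" "\<And>x y. x \<in> R \<Longrightarrow> y \<in> R \<Longrightarrow> x + y \<in> R"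
    "\<And>x y. x \<in> R \<Longrightarrow> y \<in> R \<Longrightarrow> x * y \<in> R" "\<And>x. x \<in> R \<Longrightarrow> - x \<in> R"
    and A: "\<And>i j. i < dim_row A \<Longrightarrow> j < dim_col A \<Longrightarrow> A $$ (i,j) \<in> R"
  shows "det A \<in> R"
proof -
  have S: "(\<And>i. i \<in> B \<Longrightarrow> f i \<in> R) \<Longrightarrow> sum f B \<in> R" for f and B :: "'b set"
    by (induction B rule: infinite_finite_induct) (use assms in auto)
  have P: "(\<And>i. i \<in> B \<Longrightarrow> f i \<in> R) \<Longrightarrow> prod f B \<in> R" for f and B :: "'b set"
    by (induction B rule: infinite_finite_induct) (use assms in auto)
  have sg: "signof p \<in> R" for p :: "nat \<Rightarrow> nat" using assms by (simp add: sign_def)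
  show ?thesis
  proof (cases "dim_row A = dim_col A")
    case True
    have "A $$ (i, p i) \<in> R" if "p permutes {0..<dim_row A}" "i \<in> {0..<dim_row A}" for p i
      by (rule A) (use True permutes_in_image[OF that(1)] that(2) in auto)
    then have "signof p * (\<Prod>i = 0..<dim_row A. A $$ (i, p i)) \<in> R" if "p permutes {0..<dim_row A}" for p
      using that by (intro assms(4)[OF sg] P) blast
    then have "(\<Sum>p\<in>{p. p permutes {0..<dim_row A}}. signof p * (\<Prod>i = 0..<dim_row A. A $$ (i, p i))) \<in> R"
      by (intro S) blast
    then show ?thesis unfolding det_def if_P[OF True] .
  next
    case False show ?thesis unfolding det_def if_not_P[OF False] by (rule assms(1))
  qed
qed




context fixes v :: "'k::field \<Rightarrow> ereal" assumes dv: "discrete_valuation v"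
begin
abbreviation "Ok \<equiv> val_ring v"

lemma entries_in_mult:
  assumes "A \<in> carrier_mat a b" "B \<in> carrier_mat b c" "entries_in A Ok" "entries_in B Ok"
  shows "entries_in (A * B) Ok"
  unfolding entries_in_def
proof (intro allI impI)
  fix i j assume ij: "i < dim_row (A * B)" "j < dim_col (A * B)"
  have "(A * B) $$ (i,j) = (\<Sum>l\<in>{0..<b}. A $$ (i,l) * B $$ (l,j))"
    using assms ij by (simp add: scalar_prod_def)
  also have "\<dots> \<in> Ok" using assms ij unfolding entries_in_def
    by (intro O_sum[OF dv] O_mult[OF dv]) auto
  finally show "(A * B) $$ (i,j) \<in> Ok" .
qed

lemma GL_mult: assumes "GL_over m Ok U" "GL_over m Ok W" shows "GL_over m Ok (U * W)"
proof -
  from assms obtain U' W' where U: "U \<in> carrier_mat m m" "entries_in U Ok" "U' \<in> carrier_mat m m"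
    "entries_in U' Ok" "U * U' = 1\<^sub>m m" "U' * U = 1\<^sub>m m"
    and W: "W \<in> carrier_mat m m" "entries_in W Ok" "W' \<in> carrier_mat m m"
    "entries_in W' Ok" "W * W' = 1\<^sub>m m" "W' * W = 1\<^sub>m m"
    unfolding GL_over_def by blast
  have "U * W * (W' * U') = U * (W * (W' * U'))" using U W by (intro assoc_mult_mat) auto
  also have "W * (W' * U') = (W * W') * U'" using U W by (intro assoc_mult_mat[symmetric]) auto
  also have "U * ((W * W') * U') = 1\<^sub>m m" using U W by simp
  finally have 1: "U * W * (W' * U') = 1\<^sub>m m" .
  have "W' * U' * (U * W) = W' * (U' * (U * W))" using U W by (intro assoc_mult_mat) auto
  also have "U' * (U * W) = (U' * U) * W" using U W by (intro assoc_mult_mat[symmetric]) auto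
  also have "W' * ((U' * U) * W) = 1\<^sub>m m" using U W by simp
  finally have 2: "W' * U' * (U * W) = 1\<^sub>m m" .
  show ?thesis unfolding GL_over_def
    using U W 1 2 by (intro conjI exI[of _ "W' * U'"] entries_in_mult) (auto intro: entries_in_mult)
qed

lemma entries_in_one: "entries_in (1\<^sub>m m) Ok"
  unfolding entries_in_def using O_0[OF dv] O_1[OF dv] by auto

lemma GL_one: "GL_over m Ok (1\<^sub>m m)"
  unfolding GL_over_def using entries_in_one by (intro conjI exI[of _ "1\<^sub>m m"]) auto

lemma GL_nilp:
  assumes N: "N \<in> carrier_mat m m" "entries_in N Ok" "N * N = 0\<^sub>m m m"
  shows "GL_over m Ok (1\<^sub>m m + N)"
proof -
  have e1: "entries_in (1\<^sub>m m + N) Ok" using N entries_in_one[of m]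
    unfolding entries_in_def by (auto intro!: O_add[OF dv] simp: O_1[OF dv])
  have e2: "entries_in (1\<^sub>m m - N) Ok" using N entries_in_one[of m]
    unfolding entries_in_def by (auto intro!: O_diff[OF dv] O_uminus[OF dv] simp: O_1[OF dv])
  have "(1\<^sub>m m + N) * (1\<^sub>m m - N) = 1\<^sub>m m * (1\<^sub>m m - N) + N * (1\<^sub>m m - N)"
    using N by (intro add_mult_distrib_mat) auto
  also have "\<dots> = (1\<^sub>m m - N) + (N * 1\<^sub>m m - N * N)"
    using N by (subst mult_minus_distrib_mat) auto
  also have "\<dots> = 1\<^sub>m m" using N by (intro eq_matI) auto
  finally have 1: "(1\<^sub>m m + N) * (1\<^sub>m m - N) = 1\<^sub>m m" .
  have "(1\<^sub>m m - N) * (1\<^sub>m m + N) = 1\<^sub>m m * (1\<^sub>m m + N) - N * (1\<^sub>m m + N)"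
    using N by (intro minus_mult_distrib_mat) auto
  also have "\<dots> = (1\<^sub>m m + N) - (N * 1\<^sub>m m + N * N)"
    using N by (subst mult_add_distrib_mat) auto
  also have "\<dots> = 1\<^sub>m m" using N by (intro eq_matI) auto
  finally have 2: "(1\<^sub>m m - N) * (1\<^sub>m m + N) = 1\<^sub>m m" .
  show ?thesis unfolding GL_over_def using N e1 e2 1 2
    by (intro conjI exI[of _ "1\<^sub>m m - N"]) auto
qed

end

definition sw :: "nat \<Rightarrow> nat \<Rightarrow> nat \<Rightarrow> nat" where
  "sw r p i = (if i = r then p else if i = p then r else i)"

definition swmat :: "nat \<Rightarrow> nat \<Rightarrow> nat \<Rightarrow> 'a::comm_ring_1 mat" where
  "swmat m r p = mat m m (\<lambda>(i,j). if j = sw r p i then 1 else 0)"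

lemma sw_lt: "r < m \<Longrightarrow> p < m \<Longrightarrow> i < m \<Longrightarrow> sw r p i < m" unfolding sw_def by auto
lemma sw_sw[simp]: "sw r p (sw r p i) = i" unfolding sw_def by auto

lemma swmat_mult:
  assumes "r < m" "p < m" "B \<in> carrier_mat m c" "i < m" "j < c"
  shows "(swmat m r p * B) $$ (i,j) = B $$ (sw r p i, j)"
proof -
  have "(swmat m r p * B) $$ (i,j) = (\<Sum>l\<in>{0..<m}. (if l = sw r p i then 1 else 0) * B $$ (l,j))"
    using assms by (simp add: scalar_prod_def swmat_def)
  also have "\<dots> = (\<Sum>l\<in>{0..<m}. if l = sw r p i then B $$ (l,j) else 0)"
    by (intro sum.cong) auto
  also have "\<dots> = B $$ (sw r p i, j)" using sw_lt[OF assms(1,2,4)] by simp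
  finally show ?thesis .
qed

lemma swmat_carrier[simp]: "swmat m r p \<in> carrier_mat m m" unfolding swmat_def by simp

lemma GL_swmat: assumes dv: "discrete_valuation v" and "r < m" "p < m"
  shows "GL_over m (val_ring v) (swmat m r p)"
proof -
  have sq: "swmat m r p * swmat m r p = (1\<^sub>m m :: 'a mat)"
  proof (intro eq_matI)
    fix i j assume ij: "i < dim_row (1\<^sub>m m :: 'a mat)" "j < dim_col (1\<^sub>m m :: 'a mat)"
    then have "(swmat m r p * swmat m r p) $$ (i,j) = (swmat m r p :: 'a mat) $$ (sw r p i, j)"
      by (intro swmat_mult) (use assms in auto)
    also have "\<dots> = (1\<^sub>m m :: 'a mat) $$ (i,j)" using ij sw_lt[OF assms(2,3)] by (auto simp: swmat_def)
    finally show "(swmat m r p * swmat m r p) $$ (i,j) = (1\<^sub>m m :: 'a mat) $$ (i,j)" .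
  qed (auto simp: swmat_def)
  have "entries_in (swmat m r p) (val_ring v)"
    unfolding entries_in_def swmat_def using O_0[OF dv] O_1[OF dv] by auto
  then show ?thesis unfolding GL_over_def using sq by (intro conjI exI[of _ "swmat m r p"]) auto
qed




lemma elim_exists:
  assumes dv: "discrete_valuation v" and A: "(A :: 'k::field mat) \<in> carrier_mat m n"
  shows "\<exists>U. GL_over m (val_ring v) U \<and> (\<forall>i j. n \<le> i \<longrightarrow> i < m \<longrightarrow> j < n \<longrightarrow> (U * A) $$ (i,j) = 0)"
proof -
  have step: "k \<le> n \<Longrightarrow> \<exists>U r. GL_over m (val_ring v) U \<and> r \<le> k \<and> (\<forall>i j. r \<le> i \<longrightarrow> i < m \<longrightarrow> j < k \<longrightarrow> (U * A) $$ (i,j) = 0)" for k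
  proof (induction k)
    case 0 then show ?case using GL_one[OF dv] by (intro exI[of _ "1\<^sub>m m"] exI[of _ 0]) auto
  next
    case (Suc k)
    then obtain U r where U: "GL_over m (val_ring v) U" "r \<le> k"
      and Z: "\<forall>i j. r \<le> i \<longrightarrow> i < m \<longrightarrow> j < k \<longrightarrow> (U * A) $$ (i,j) = 0" by auto
    have kn: "k < n" using Suc by simp
    have Uc: "U \<in> carrier_mat m m" using U unfolding GL_over_def by auto
    define B where "B = U * A"
    have Bc: "B \<in> carrier_mat m n" using Uc A unfolding B_def by auto
    show ?case
    proof (cases "\<forall>i. r \<le> i \<longrightarrow> i < m \<longrightarrow> B $$ (i,k) = 0")
      case True
      show ?thesis
      proof (intro exI[of _ U] exI[of _ r] conjI allI impI)
        fix i j assume "r \<le> i" "i < m" "j < Suc k"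
        then show "(U * A) $$ (i,j) = 0" using True Z unfolding B_def by (cases "j = k") auto
      qed (use U in auto)
    next
      case False
      then obtain i0 where i0: "r \<le> i0" "i0 < m" "B $$ (i0,k) \<noteq> 0" by auto
      define S where "S = {r..<m}"
      define mu where "mu = Min ((\<lambda>i. v (B $$ (i,k))) ` S)"
      have fin: "finite S" "S \<noteq> {}" using i0 unfolding S_def by auto
      have "mu \<in> (\<lambda>i. v (B $$ (i,k))) ` S" unfolding mu_def using fin by (intro Min_in) auto
      then obtain p where p: "p \<in> S" "v (B $$ (p,k)) = mu" by auto
      have pmin: "i \<in> S \<Longrightarrow> v (B $$ (p,k)) \<le> v (B $$ (i,k))" for i
        using fin p(2) unfolding mu_def by (auto intro: Min_le)
      have pnz: "B $$ (p,k) \<noteq> 0"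
      proof
        assume "B $$ (p,k) = 0"
        then have "v (B $$ (p,k)) = \<infinity>" using dv_inf[OF dv] by simp
        moreover have "v (B $$ (i0,k)) \<noteq> \<infinity>" using dv_inf[OF dv] i0 by simp
        moreover have "v (B $$ (p,k)) \<le> v (B $$ (i0,k))" using pmin[of i0] i0 unfolding S_def by auto
        ultimately show False by simp
      qed
      have rm: "r < m" "p < m" "r \<le> p" using p i0 unfolding S_def by auto
      define P where "P = (swmat m r p :: 'k mat)"
      define C where "C = P * B"
      have Pc: "P \<in> carrier_mat m m" unfolding P_def by simp
      have Cc: "C \<in> carrier_mat m n" unfolding C_def using Pc Bc by (rule mult_carrier_mat)
      have Cij: "i < m \<Longrightarrow> j < n \<Longrightarrow> C $$ (i,j) = B $$ (sw r p i, j)" for i j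
        unfolding C_def P_def by (rule swmat_mult) (use rm Bc in auto)
      have swS: "i \<in> S \<Longrightarrow> sw r p i \<in> S" for i unfolding S_def sw_def using rm by auto
      define N where "N = mat m m (\<lambda>(i,l). if l = r \<and> r < i then - (C $$ (i,k) / C $$ (r,k)) else 0)"
      have Nc: "N \<in> carrier_mat m m" unfolding N_def by simp
      have Crk: "C $$ (r,k) = B $$ (p,k)" using Cij[of r k] rm kn by (simp add: sw_def)
      have Nent: "entries_in N (val_ring v)"
        unfolding entries_in_def
      proof (intro allI impI)
        fix i l assume il: "i < dim_row N" "l < dim_col N"
        show "N $$ (i,l) \<in> val_ring v"
        proof (cases "l = r \<and> r < i")
          case True
          have iS: "sw r p i \<in> S" using swS[of i] il True Nc unfolding S_def by auto
          have "C $$ (i,k) / C $$ (r,k) \<in> val_ring v"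
            using Crk pnz pmin[OF iS] Cij[of i k] il Nc kn by (intro O_div[OF dv]) auto
          then show ?thesis using il True Nc unfolding N_def by (auto intro: O_uminus[OF dv])
        next
          case False then show ?thesis using il Nc O_0[OF dv] unfolding N_def by auto
        qed
      qed
      have NN: "N * N = 0\<^sub>m m m"
      proof (intro eq_matI)
        fix i j assume ij: "i < dim_row (0\<^sub>m m m :: 'k mat)" "j < dim_col (0\<^sub>m m m :: 'k mat)"
        have "(N * N) $$ (i,j) = (\<Sum>l\<in>{0..<m}. N $$ (i,l) * N $$ (l,j))"
          using ij Nc by (simp add: scalar_prod_def)
        also have "\<dots> = 0" by (rule sum.neutral) (use ij in \<open>auto simp: N_def\<close>)
        finally show "(N*N) $$ (i,j) = (0\<^sub>m m m :: 'k mat) $$ (i,j)" using ij by simp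
      qed (use Nc in auto)
      have NC: "(N * C) $$ (i,j) = (if r < i then - (C $$ (i,k) / C $$ (r,k)) * C $$ (r,j) else 0)"
        if ij: "i < m" "j < n" for i j
      proof -
        have "(N * C) $$ (i,j) = (\<Sum>l\<in>{0..<m}. N $$ (i,l) * C $$ (l,j))"
          using ij Nc Cc by (simp add: scalar_prod_def)
        also have "\<dots> = (\<Sum>l\<in>{0..<m}. if l = r then (if r < i then - (C $$ (i,k) / C $$ (r,k)) * C $$ (r,j) else 0) else 0)"
          by (intro sum.cong) (use ij in \<open>auto simp: N_def\<close>)
        also have "\<dots> = (if r < i then - (C $$ (i,k) / C $$ (r,k)) * C $$ (r,j) else 0)" using rm by simp
        finally show ?thesis .
      qed
      define U' where "U' = (1\<^sub>m m + N) * P * U"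
      have GU': "GL_over m (val_ring v) U'" unfolding U'_def P_def
        by (intro GL_mult[OF dv] GL_nilp[OF dv] GL_swmat[OF dv] Nc Nent NN U(1) rm)
      have U'A: "U' * A = C + N * C"
      proof -
        have INc: "1\<^sub>m m + N \<in> carrier_mat m m" using Nc by simp
        have "U' * A = (1\<^sub>m m + N) * P * (U * A)" unfolding U'_def
          by (rule assoc_mult_mat[OF mult_carrier_mat[OF INc Pc] Uc A])
        also have "\<dots> = (1\<^sub>m m + N) * (P * (U * A))"
          by (rule assoc_mult_mat[OF INc Pc mult_carrier_mat[OF Uc A]])
        also have "\<dots> = (1\<^sub>m m + N) * C" unfolding C_def B_def ..
        also have "\<dots> = 1\<^sub>m m * C + N * C" using Nc Cc by (intro add_mult_distrib_mat) auto
        also have "\<dots> = C + N * C" using Cc by simp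
        finally show ?thesis .
      qed
      show ?thesis
      proof (intro exI[of _ U'] exI[of _ "Suc r"] conjI allI impI)
        fix i j assume ij: "Suc r \<le> i" "i < m" "j < Suc k"
        have jn: "j < n" using ij kn by simp
        have e: "(U' * A) $$ (i,j) = C $$ (i,j) + - (C $$ (i,k) / C $$ (r,k)) * C $$ (r,j)"
          unfolding U'A using ij jn Cc Nc NC[of i j] by simp
        show "(U' * A) $$ (i,j) = 0"
        proof (cases "j = k")
          case True then show ?thesis unfolding e using Crk pnz by simp
        next
          case False
          then have jk: "j < k" using ij by simp
          have "sw r p i \<in> S" using swS[of i] ij unfolding S_def by auto
          then have "C $$ (i,j) = 0" using Cij[of i j] ij jn Z jk unfolding B_def S_def by auto
          moreover have "C $$ (r,j) = 0" using Cij[of r j] rm jn Z jk unfolding B_def by (auto simp: sw_def)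
          ultimately show ?thesis unfolding e by simp
        qed
      qed (use GU' U in auto)
    qed
  qed
  obtain U r where U: "GL_over m (val_ring v) U" "r \<le> n"
    "\<forall>i j. r \<le> i \<longrightarrow> i < m \<longrightarrow> j < n \<longrightarrow> (U * A) $$ (i,j) = 0" using step[of n] by auto
  then show ?thesis by (intro exI[of _ U]) auto
qed




definition spanO :: "('k::field \<Rightarrow> ereal) \<Rightarrow> ('k \<Rightarrow> 'l::field) \<Rightarrow> nat \<Rightarrow> (nat \<Rightarrow> 'l) \<Rightarrow> 'l set" where
  "spanO v \<iota> d g = {(\<Sum>i<d. \<iota> (c i) * g i) | c. \<forall>i<d. c i \<in> val_ring v}"

locale emb_setup =
  fixes v :: "'k::field \<Rightarrow> ereal" and \<iota> :: "'k \<Rightarrow> 'l::field"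
  assumes dv: "discrete_valuation v" and emb: "K_embedding \<iota>"
begin


lemma i_one[simp]: "\<iota> 1 = 1" using emb unfolding K_embedding_def by auto
lemma i_add[simp]: "\<iota> (a + b) = \<iota> a + \<iota> b" using emb unfolding K_embedding_def by auto
lemma i_mult[simp]: "\<iota> (a * b) = \<iota> a * \<iota> b" using emb unfolding K_embedding_def by auto

lemma i_zero[simp]: "\<iota> 0 = 0"
proof -
  have "\<iota> (0 + 0) = \<iota> 0 + \<iota> 0" by (rule i_add)
  then have "\<iota> 0 + \<iota> 0 = \<iota> 0 + 0" by (metis add.right_neutral)
  then show ?thesis by (rule add_left_imp_eq)
qed

sublocale h: field_hom \<iota> by unfold_locales auto

lemmas O0 = O_0[OF dv] and O1 = O_1[OF dv] and Oadd = O_add[OF dv] and Omult = O_mult[OF dv]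
  and Ouminus = O_uminus[OF dv] and Odiff = O_diff[OF dv] and Osum = O_sum[OF dv]

lemma span_gen: "k < d \<Longrightarrow> g k \<in> spanO v \<iota> d g"
proof -
  assume k: "k < d"
  have "(\<Sum>i<d. \<iota> (if i = k then 1 else 0) * g i) = (\<Sum>i<d. if i = k then g i else 0)"
    by (intro sum.cong) auto
  also have "\<dots> = g k" using k by simp
  finally show ?thesis unfolding spanO_def
    by (intro CollectI exI[of _ "\<lambda>i. if i = k then 1 else 0"]) (auto simp: O0 O1)
qed

lemma span_0: "0 \<in> spanO v \<iota> d g"
  unfolding spanO_def by (rule CollectI, rule exI[of _ "\<lambda>i. 0"]) (auto simp: O0)

lemma span_add: "x \<in> spanO v \<iota> d g \<Longrightarrow> y \<in> spanO v \<iota> d g \<Longrightarrow> x + y \<in> spanO v \<iota> d g"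
  unfolding spanO_def
proof (elim CollectE exE conjE, rule CollectI)
  fix c c' assume "x = (\<Sum>i<d. \<iota> (c i) * g i)" "\<forall>i<d. c i \<in> Ov v" "y = (\<Sum>i<d. \<iota> (c' i) * g i)" "\<forall>i<d. c' i \<in> Ov v"
  then show "\<exists>c. x + y = (\<Sum>i<d. \<iota> (c i) * g i) \<and> (\<forall>i<d. c i \<in> Ov v)"
    by (intro exI[of _ "\<lambda>i. c i + c' i"]) (auto simp: sum.distrib distrib_right intro: Oadd)
qed

lemma span_smult: "a \<in> Ov v \<Longrightarrow> x \<in> spanO v \<iota> d g \<Longrightarrow> \<iota> a * x \<in> spanO v \<iota> d g"
  unfolding spanO_def
proof (elim CollectE exE conjE, rule CollectI)
  fix c assume a: "a \<in> Ov v" and "x = (\<Sum>i<d. \<iota> (c i) * g i)" "\<forall>i<d. c i \<in> Ov v"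
  then show "\<exists>c. \<iota> a * x = (\<Sum>i<d. \<iota> (c i) * g i) \<and> (\<forall>i<d. c i \<in> Ov v)"
    by (intro exI[of _ "\<lambda>i. a * c i"]) (auto simp: sum_distrib_left ac_simps intro: Omult)
qed

lemma span_sum: "(\<And>j. j \<in> J \<Longrightarrow> c j \<in> Ov v) \<Longrightarrow> (\<And>j. j \<in> J \<Longrightarrow> z j \<in> spanO v \<iota> d g)
  \<Longrightarrow> (\<Sum>j\<in>J. \<iota> (c j) * z j) \<in> spanO v \<iota> d g"
  by (induction J rule: infinite_finite_induct) (auto intro: span_add span_smult span_0)

lemma span_trans: "(\<And>i. i < d \<Longrightarrow> g i \<in> spanO v \<iota> e h) \<Longrightarrow> z \<in> spanO v \<iota> d g \<Longrightarrow> z \<in> spanO v \<iota> e h"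
  by (subst (asm) spanO_def) (auto intro!: span_sum)

lemma span_mult_right: "z \<in> spanO v \<iota> d g \<Longrightarrow> (\<And>i. i < d \<Longrightarrow> g i * w \<in> spanO v \<iota> e h)
   \<Longrightarrow> z * w \<in> spanO v \<iota> e h"
proof (subst (asm) spanO_def, elim CollectE exE conjE)
  fix c assume z: "z = (\<Sum>i<d. \<iota> (c i) * g i)" "\<forall>i<d. c i \<in> Ov v" and gw: "\<And>i. i < d \<Longrightarrow> g i * w \<in> spanO v \<iota> e h"
  have "z * w = (\<Sum>i<d. \<iota> (c i) * (g i * w))" unfolding z by (simp add: sum_distrib_right mult.assoc)
  also have "\<dots> \<in> spanO v \<iota> e h" using z gw by (intro span_sum) auto
  finally show ?thesis .
qed

end




context emb_setup begin

definition "PO = {q. \<forall>i. coeff q i \<in> Ov v}"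

lemma PO_closed: "0 \<in> PO" "1 \<in> PO" "x \<in> PO \<Longrightarrow> y \<in> PO \<Longrightarrow> x + y \<in> PO"
  "x \<in> PO \<Longrightarrow> y \<in> PO \<Longrightarrow> x * y \<in> PO" "x \<in> PO \<Longrightarrow> - x \<in> PO"
  unfolding PO_def
  by (auto simp: O0 O1 coeff_1 coeff_mult intro!: Oadd Ouminus Osum Omult)

lemma PO_pCons: "a \<in> Ov v \<Longrightarrow> p \<in> PO \<Longrightarrow> pCons a p \<in> PO"
  unfolding PO_def by (auto simp: coeff_pCons split: nat.split)

lemma det_trick:
  assumes k0: "k0 < d" "g k0 \<noteq> 0" and cl: "\<And>i. i < d \<Longrightarrow> y * g i \<in> spanO v \<iota> d g"
  shows "y \<in> int_closure v \<iota>"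
proof -
  have "\<forall>i. \<exists>c. i < d \<longrightarrow> (y * g i = (\<Sum>l<d. \<iota> (c l) * g l) \<and> (\<forall>l<d. c l \<in> Ov v))"
    using cl unfolding spanO_def by blast
  then obtain C where C: "\<And>i. i < d \<Longrightarrow> y * g i = (\<Sum>l<d. \<iota> (C i l) * g l) \<and> (\<forall>l<d. C i l \<in> Ov v)"
    by metis
  define Cm where "Cm = mat d d (\<lambda>(i,l). C i l)"
  have Cmc: "Cm \<in> carrier_mat d d" unfolding Cm_def by simp
  define gv where "gv = vec d g"
  have "map_mat \<iota> Cm *\<^sub>v gv = y \<cdot>\<^sub>v gv"
  proof (intro eq_vecI)
    fix i assume "i < dim_vec (y \<cdot>\<^sub>v gv)"
    then have i: "i < d" unfolding gv_def by simp
    have "(map_mat \<iota> Cm *\<^sub>v gv) $ i = (\<Sum>l\<in>{0..<d}. \<iota> (C i l) * g l)"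
      using i by (simp add: Cm_def gv_def scalar_prod_def)
    also have "\<dots> = y * g i" using C[OF i] by (simp add: atLeast0LessThan)
    finally show "(map_mat \<iota> Cm *\<^sub>v gv) $ i = (y \<cdot>\<^sub>v gv) $ i" using i by (simp add: gv_def)
  qed (simp add: gv_def Cm_def)
  moreover have "gv \<noteq> 0\<^sub>v d" using k0 unfolding gv_def by (metis index_vec index_zero_vec(1))
  ultimately have "eigenvector (map_mat \<iota> Cm) gv y" unfolding eigenvector_def gv_def Cm_def by simp
  then have "eigenvalue (map_mat \<iota> Cm) y" unfolding eigenvalue_def by blast
  then have "poly (char_poly (map_mat \<iota> Cm)) y = 0"
    using eigenvalue_root_char_poly[of "map_mat \<iota> Cm" d] Cmc by simp
  then have root: "poly (map_poly \<iota> (char_poly Cm)) y = 0" using h.char_poly_hom[OF Cmc] by simp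
  have lc: "lead_coeff (char_poly Cm) = 1" using degree_monic_char_poly[OF Cmc] by simp
  have "char_poly Cm \<in> PO" unfolding char_poly_def
  proof (rule det_in_subring[OF PO_closed])
    fix i j assume ij: "i < dim_row (char_poly_matrix Cm)" "j < dim_col (char_poly_matrix Cm)"
    have ij': "i < d" "j < d" using ij char_poly_matrix_closed[OF Cmc] by auto
    have "char_poly_matrix Cm $$ (i,j) = [:0,1:] * (if i = j then 1 else 0) + [: - C i j :]"
      using ij' Cmc unfolding char_poly_matrix_def by (simp add: Cm_def)
    also have "\<dots> = pCons (- C i j) (if i = j then 1 else 0)"
      by (cases "i = j") (simp_all add: one_pCons)
    also have "\<dots> \<in> PO" using C[OF ij'(1)] ij' PO_closed(1,2)
      by (intro PO_pCons) (auto intro: Ouminus)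
    finally show "char_poly_matrix Cm $$ (i,j) \<in> PO" .
  qed (auto simp: O0 O1)
  then show ?thesis unfolding int_closure_def PO_def using lc root by blast
qed

end



context emb_setup begin

lemma int_powers:
  assumes "y \<in> int_closure v \<iota>"
  shows "\<exists>d>0. \<forall>k. y^k \<in> spanO v \<iota> d (\<lambda>i. y^i)"
proof -
  obtain p where p: "lead_coeff p = 1" "\<forall>i. coeff p i \<in> Ov v" "poly (map_poly \<iota> p) y = 0"
    using assms unfolding int_closure_def by blast
  define d where "d = degree p"
  have pe: "poly (map_poly \<iota> p) y = (\<Sum>i\<le>d. \<iota> (coeff p i) * y ^ i)"
    unfolding poly_altdef d_def by simp
  have d0: "d > 0"
  proof (rule ccontr)
    assume "\<not> d > 0"
    then have "d = 0" by simp
    then have "poly (map_poly \<iota> p) y = 1" unfolding pe using p(1) d_def by simp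
    then show False using p(3) by simp
  qed
  have "(\<Sum>i\<le>d. \<iota> (coeff p i) * y ^ i) = (\<Sum>i<d. \<iota> (coeff p i) * y ^ i) + y ^ d"
    using p(1) unfolding d_def by (simp add: lessThan_Suc_atMost[symmetric])
  then have yd: "y ^ d = (\<Sum>i<d. \<iota> (- coeff p i) * y ^ i)"
  proof -
    have "(\<Sum>i<d. \<iota> (- coeff p i) * y ^ i) = - (\<Sum>i<d. \<iota> (coeff p i) * y ^ i)"
      by (simp add: h.hom_uminus sum_negf)
    moreover have "y ^ d + (\<Sum>i<d. \<iota> (coeff p i) * y ^ i) = 0"
      using p(3) \<open>(\<Sum>i\<le>d. \<iota> (coeff p i) * y ^ i) = (\<Sum>i<d. \<iota> (coeff p i) * y ^ i) + y ^ d\<close> unfolding pe by (simp add: add.commute)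
    ultimately have "y ^ d + (\<Sum>i<d. \<iota> (coeff p i) * y ^ i) = (\<Sum>i<d. \<iota> (- coeff p i) * y ^ i) + (\<Sum>i<d. \<iota> (coeff p i) * y ^ i)"
      by simp
    then show ?thesis by (rule add_right_imp_eq)
  qed
  have ydS: "y ^ d \<in> spanO v \<iota> d (\<lambda>i. y^i)"
    unfolding spanO_def yd using p(2) by (intro CollectI exI[of _ "\<lambda>i. - coeff p i"]) (auto intro: Ouminus)
  have stepS: "z \<in> spanO v \<iota> d (\<lambda>i. y^i) \<Longrightarrow> z * y \<in> spanO v \<iota> d (\<lambda>i. y^i)" for z
  proof (erule span_mult_right)
    fix i assume i: "i < d"
    show "y ^ i * y \<in> spanO v \<iota> d (\<lambda>i. y^i)"
    proof (cases "Suc i < d")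
      case True then show ?thesis using span_gen[of "Suc i" d "\<lambda>i. y^i"] by (simp add: mult.commute)
    next
      case False then have "Suc i = d" using i by simp
      have "y ^ i * y = y ^ d" using \<open>Suc i = d\<close> by (metis power_Suc2)
      then show ?thesis using ydS by simp
    qed
  qed
  have "y^k \<in> spanO v \<iota> d (\<lambda>i. y^i)" for k
  proof (induction k)
    case 0 then show ?case using span_gen[of 0 d "\<lambda>i. y^i"] d0 by simp
  next
    case (Suc k) then show ?case using stepS[of "y^k"] by (simp add: mult.commute)
  qed
  then show ?thesis using d0 by blast
qed

lemma int_add:
  assumes a: "a \<in> int_closure v \<iota>" and b: "b \<in> int_closure v \<iota>"
  shows "a + b \<in> int_closure v \<iota>"
proof -
  obtain d where d: "d > 0" "\<And>k. a^k \<in> spanO v \<iota> d (\<lambda>i. a^i)" using int_powers[OF a] by blast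
  obtain e where e: "e > 0" "\<And>k. b^k \<in> spanO v \<iota> e (\<lambda>i. b^i)" using int_powers[OF b] by blast
  define g where "g t = a ^ (t div e) * b ^ (t mod e)" for t
  have gij: "i < d \<Longrightarrow> j < e \<Longrightarrow> a^i * b^j \<in> spanO v \<iota> (d*e) g" for i j
  proof -
    assume ij: "i < d" "j < e"
    have lt: "i * e + j < d * e"
    proof -
      have "i * e + j < i * e + e" using ij by simp
      also have "\<dots> = Suc i * e" by simp
      also have "\<dots> \<le> d * e" using ij by (intro mult_le_mono1) simp
      finally show ?thesis .
    qed
    have "g (i * e + j) = a^i * b^j" unfolding g_def using ij by simp
    then show ?thesis using span_gen[OF lt, of g] by simp
  qed
  show ?thesis
  proof (rule det_trick[of 0 "d*e" g])
    show "0 < d * e" using d e by simp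
    show "g 0 \<noteq> 0" unfolding g_def by simp
  next
    fix t assume t: "t < d * e"
    define i where "i = t div e"
    define j where "j = t mod e"
    have ij: "i < d" "j < e" unfolding i_def j_def using t e(1)
      by (auto simp: less_mult_imp_div_less)
    have gt: "g t = a^i * b^j" unfolding g_def i_def j_def ..
    have A: "a * g t \<in> spanO v \<iota> (d*e) g"
    proof -
      have "a * g t = a^(Suc i) * b^j" unfolding gt by simp
      also have "\<dots> \<in> spanO v \<iota> (d*e) g"
        by (rule span_mult_right[OF d(2)]) (use gij ij in auto)
      finally show ?thesis .
    qed
    have B: "b * g t \<in> spanO v \<iota> (d*e) g"
    proof -
      have "b * g t = b^(Suc j) * a^i" unfolding gt by (simp add: ac_simps)
      also have "\<dots> \<in> spanO v \<iota> (d*e) g"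
        by (rule span_mult_right[OF e(2)]) (use gij ij in \<open>auto simp: mult.commute\<close>)
      finally show ?thesis .
    qed
    show "(a + b) * g t \<in> spanO v \<iota> (d*e) g" using span_add[OF A B] by (simp add: distrib_right)
  qed
qed

lemma int_smult:
  assumes a: "a \<in> int_closure v \<iota>" and c: "c \<in> Ov v"
  shows "\<iota> c * a \<in> int_closure v \<iota>"
proof -
  obtain d where d: "d > 0" "\<And>k. a^k \<in> spanO v \<iota> d (\<lambda>i. a^i)" using int_powers[OF a] by blast
  show ?thesis
  proof (rule det_trick[of 0 d "\<lambda>i. a^i"])
    fix i assume "i < d"
    have "\<iota> c * a * a ^ i = \<iota> c * a ^ Suc i" by simp
    also have "\<dots> \<in> spanO v \<iota> d (\<lambda>i. a^i)" by (rule span_smult[OF c d(2)])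
    finally show "\<iota> c * a * a ^ i \<in> spanO v \<iota> d (\<lambda>i. a^i)" .
  qed (use d in auto)
qed

lemma int_zero: "0 \<in> int_closure v \<iota>"
proof -
  have "lead_coeff [:0,1::'k:] = 1" by simp
  moreover have "\<forall>i. coeff [:0,1::'k:] i \<in> Ov v" by (auto simp: coeff_pCons O0 O1 split: nat.split)
  moreover have "poly (map_poly \<iota> [:0,1:]) 0 = 0" by simp
  ultimately show ?thesis unfolding int_closure_def by blast
qed

lemma int_lincomb:
  "(\<And>j. j \<in> J \<Longrightarrow> c j \<in> Ov v) \<Longrightarrow> (\<And>j. j \<in> J \<Longrightarrow> g j \<in> int_closure v \<iota>)
   \<Longrightarrow> (\<Sum>j\<in>J. \<iota> (c j) * g j) \<in> int_closure v \<iota>"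
  by (induction J rule: infinite_finite_induct) (auto intro: int_add int_smult int_zero)

end



lemma adj_inv:
  assumes A: "(A :: 'a::field mat) \<in> carrier_mat n n" and d: "det A \<noteq> 0"
  shows "A * (inverse (det A) \<cdot>\<^sub>m adj_mat A) = 1\<^sub>m n"
    "(inverse (det A) \<cdot>\<^sub>m adj_mat A) * A = 1\<^sub>m n"
    "inverse (det A) \<cdot>\<^sub>m adj_mat A \<in> carrier_mat n n"
proof -
  have c: "adj_mat A \<in> carrier_mat n n" using adj_mat[OF A] by simp
  have "A * (inverse (det A) \<cdot>\<^sub>m adj_mat A) = inverse (det A) \<cdot>\<^sub>m (A * adj_mat A)"
    using A c by (rule mult_smult_distrib)
  also have "\<dots> = 1\<^sub>m n" unfolding adj_mat(2)[OF A] using d by (intro eq_matI) auto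
  finally show "A * (inverse (det A) \<cdot>\<^sub>m adj_mat A) = 1\<^sub>m n" .
  have "(inverse (det A) \<cdot>\<^sub>m adj_mat A) * A = inverse (det A) \<cdot>\<^sub>m (adj_mat A * A)"
    using c A by (rule mult_smult_assoc_mat)
  also have "\<dots> = 1\<^sub>m n" unfolding adj_mat(3)[OF A] using d by (intro eq_matI) auto
  finally show "(inverse (det A) \<cdot>\<^sub>m adj_mat A) * A = 1\<^sub>m n" .
  show "inverse (det A) \<cdot>\<^sub>m adj_mat A \<in> carrier_mat n n" using c by simp
qed

context emb_setup begin

lemma swap_sum: "(\<Sum>k<n. \<iota> (w k) * (\<Sum>j<m. \<iota> (G j k) * e j)) = (\<Sum>j<m. \<iota> (\<Sum>k<n. G j k * w k) * e j)"
proof -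
  have "(\<Sum>k<n. \<iota> (w k) * (\<Sum>j<m. \<iota> (G j k) * e j)) = (\<Sum>k<n. \<Sum>j<m. \<iota> (G j k * w k) * e j)"
    by (simp add: sum_distrib_left ac_simps)
  also have "\<dots> = (\<Sum>j<m. \<Sum>k<n. \<iota> (G j k * w k) * e j)" by (rule sum.swap)
  also have "\<dots> = (\<Sum>j<m. \<iota> (\<Sum>k<n. G j k * w k) * e j)"
    by (simp add: h.hom_sum sum_distrib_right)
  finally show ?thesis .
qed

lemma i_inj: "\<iota> a = 0 \<longleftrightarrow> a = 0" by simp
lemma i_diff: "\<iota> (a - b) = \<iota> a - \<iota> b" by (simp add: h.hom_minus)

end

locale main_setup = emb_setup v \<iota> for v :: "'k::field \<Rightarrow> ereal" and \<iota> :: "'k \<Rightarrow> 'l::field" +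
  fixes n :: nat and mu u dl eps S and act :: "nat \<Rightarrow> 'l \<Rightarrow> 'l" and \<gamma> :: "nat \<Rightarrow> 'l" and \<beta> :: 'l
  assumes deg: "ext_degree_eq \<iota> n" and hg: "hopf_galois_coords \<iota> n mu u dl eps S act"
    and ib: "is_integral_basis v \<iota> n \<gamma>" and beta: "\<beta> \<in> int_closure v \<iota>"
begin

lemma gamma_int: "j < n \<Longrightarrow> \<gamma> j \<in> int_closure v \<iota>" using ib unfolding is_integral_basis_def by blast

lemma gamma_indep:
  assumes "(\<Sum>j<n. \<iota> (c j) * \<gamma> j) = 0" "j < n" shows "c j = 0"
proof -
  obtain t where t: "t \<in> Ov v" "t \<noteq> 0" "\<forall>i\<in>{..<n}. t * c i \<in> Ov v"
    using O_clear_many[OF dv, of "{..<n}" c] by auto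
  have "(\<Sum>j<n. \<iota> (t * c j) * \<gamma> j) = \<iota> t * (\<Sum>j<n. \<iota> (c j) * \<gamma> j)"
    by (simp add: sum_distrib_left ac_simps)
  also have "\<dots> = 0" using assms by simp
  finally have "\<forall>j<n. t * c j = 0" using ib t unfolding is_integral_basis_def by auto
  then show ?thesis using t assms by simp
qed

lemma gamma_span: "\<exists>c. x = (\<Sum>j<n. \<iota> (c j) * \<gamma> j)"
proof -
  obtain e where e: "is_K_basis \<iota> n e" using deg unfolding ext_degree_eq_def by blast
  define E where "E y = (THE c. (\<forall>j\<ge>n. c j = 0) \<and> y = (\<Sum>j<n. \<iota> (c j) * e j))" for y
  have E: "y = (\<Sum>j<n. \<iota> (E y j) * e j)" for y
  proof -
    obtain c where "(\<forall>j\<ge>n. c j = 0) \<and> y = (\<Sum>j<n. \<iota> (c j) * e j)"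
      "\<And>c'. (\<forall>j\<ge>n. c' j = 0) \<and> y = (\<Sum>j<n. \<iota> (c' j) * e j) \<Longrightarrow> c' = c"
      using e unfolding is_K_basis_def by metis
    then have "E y = c" unfolding E_def by (intro the_equality) auto
    then show ?thesis using \<open>_ \<and> _\<close> by simp
  qed
  define G where "G = mat n n (\<lambda>(j,k). E (\<gamma> k) j)"
  have Gc: "G \<in> carrier_mat n n" unfolding G_def by simp
  have key: "(\<Sum>k<n. \<iota> (w k) * \<gamma> k) = (\<Sum>j<n. \<iota> (\<Sum>k<n. E (\<gamma> k) j * w k) * e j)" for w
  proof -
    have "(\<Sum>k<n. \<iota> (w k) * \<gamma> k) = (\<Sum>k<n. \<iota> (w k) * (\<Sum>j<n. \<iota> (E (\<gamma> k) j) * e j))"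
      by (subst E) simp
    also have "\<dots> = (\<Sum>j<n. \<iota> (\<Sum>k<n. E (\<gamma> k) j * w k) * e j)" by (rule swap_sum)
    finally show ?thesis .
  qed
  have Gw: "(G *\<^sub>v w) $ j = (\<Sum>k<n. E (\<gamma> k) j * w $ k)" if "j < n" "w \<in> carrier_vec n" for j w
    using that unfolding G_def by (simp add: scalar_prod_def atLeast0LessThan ac_simps)
  have detG: "det G \<noteq> 0"
  proof
    assume "det G = 0"
    then obtain w where w: "w \<in> carrier_vec n" "w \<noteq> 0\<^sub>v n" "G *\<^sub>v w = 0\<^sub>v n"
      using det_0_iff_vec_prod_zero_field[OF Gc] by auto
    have "(\<Sum>k<n. \<iota> (w $ k) * \<gamma> k) = (\<Sum>j<n. \<iota> (\<Sum>k<n. E (\<gamma> k) j * w $ k) * e j)" by (rule key)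
    also have "\<dots> = (\<Sum>j<n. \<iota> ((G *\<^sub>v w) $ j) * e j)"
      by (intro sum.cong refl) (simp add: Gw[OF _ w(1)])
    also have "\<dots> = 0" using w by simp
    finally have "\<forall>k<n. w $ k = 0" using gamma_indep[of "\<lambda>k. w $ k"] by blast
    then have "w = 0\<^sub>v n" using w by (intro eq_vecI) auto
    then show False using w by simp
  qed
  define Gi where "Gi = inverse (det G) \<cdot>\<^sub>m adj_mat G"
  have GGi: "G * Gi = 1\<^sub>m n" unfolding Gi_def using adj_inv[OF Gc detG] by simp
  have Gic: "Gi \<in> carrier_mat n n" unfolding Gi_def using adj_mat[OF Gc] by simp
  define y where "y = vec n (E x)"
  define c where "c = Gi *\<^sub>v y"
  have "G *\<^sub>v c = y" unfolding c_def using GGi Gc Gic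
    by (simp add: assoc_mult_mat_vec[symmetric, of _ n n _ n] y_def)
  have "(\<Sum>k<n. \<iota> (c $ k) * \<gamma> k) = (\<Sum>j<n. \<iota> ((G *\<^sub>v c) $ j) * e j)"
    unfolding key using Gw[of _ c] Gic by (simp add: c_def y_def)
  also have "\<dots> = x" unfolding \<open>G *\<^sub>v c = y\<close> y_def using E[of x] by simp
  finally show ?thesis by metis
qed

end



context main_setup begin

abbreviation "cB \<equiv> coordB \<iota> n \<gamma>"
abbreviation "OL \<equiv> int_closure v \<iota>"
abbreviation "ha \<equiv> hact \<iota> n act"

lemma coord_ex1: "\<exists>!c. (\<forall>j\<ge>n. c j = 0) \<and> x = (\<Sum>j<n. \<iota> (c j) * \<gamma> j)"
proof -
  obtain c where c: "x = (\<Sum>j<n. \<iota> (c j) * \<gamma> j)" using gamma_span by blast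
  define c' where "c' j = (if j < n then c j else 0)" for j
  have ex: "(\<forall>j\<ge>n. c' j = 0) \<and> x = (\<Sum>j<n. \<iota> (c' j) * \<gamma> j)" unfolding c c'_def by simp
  show ?thesis
  proof (rule ex1I[where P="\<lambda>c. (\<forall>j\<ge>n. c j = 0) \<and> x = (\<Sum>j<n. \<iota> (c j) * \<gamma> j)", OF ex])
    fix d assume d: "(\<forall>j\<ge>n. d j = 0) \<and> x = (\<Sum>j<n. \<iota> (d j) * \<gamma> j)"
    have "(\<Sum>j<n. \<iota> (d j - c' j) * \<gamma> j) = (\<Sum>j<n. \<iota> (d j) * \<gamma> j) - (\<Sum>j<n. \<iota> (c' j) * \<gamma> j)"
      by (simp add: i_diff left_diff_distrib sum_subtractf)
    also have "\<dots> = 0" using d ex by simp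
    finally have "\<And>j. j < n \<Longrightarrow> d j - c' j = 0" by (rule gamma_indep)
    then show "d = c'" using d ex by (intro ext) (metis eq_iff_diff_eq_0 not_less)
  qed
qed

lemma coordB_eq: "x = (\<Sum>j<n. \<iota> (cB x j) * \<gamma> j)" "j \<ge> n \<Longrightarrow> cB x j = 0"
proof -
  have "(\<forall>j\<ge>n. cB x j = 0) \<and> x = (\<Sum>j<n. \<iota> (cB x j) * \<gamma> j)"
    unfolding coordB_def by (rule theI'[OF coord_ex1])
  then show "x = (\<Sum>j<n. \<iota> (cB x j) * \<gamma> j)" "j \<ge> n \<Longrightarrow> cB x j = 0" by auto
qed

lemma coordB_unique: assumes "x = (\<Sum>j<n. \<iota> (c j) * \<gamma> j)" "j < n" shows "cB x j = c j"
proof -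
  define c' where "c' j = (if j < n then c j else 0)" for j
  have ex: "(\<forall>j\<ge>n. c' j = 0) \<and> x = (\<Sum>j<n. \<iota> (c' j) * \<gamma> j)" unfolding assms(1) c'_def by simp
  have "cB x = c'" unfolding coordB_def by (rule the1_equality[where P="\<lambda>c. (\<forall>j\<ge>n. c j = 0) \<and> x = (\<Sum>j<n. \<iota> (c j) * \<gamma> j)", OF coord_ex1[of x] ex])
  then show ?thesis using assms(2) unfolding c'_def by simp
qed

lemma coordB_inj: assumes "\<And>k. k < n \<Longrightarrow> cB x k = cB y k" shows "x = y"
  using coordB_eq(1)[of x] coordB_eq(1)[of y] assms by simp

lemma OL_iff: "x \<in> OL \<longleftrightarrow> (\<forall>j<n. cB x j \<in> Ov v)"
proof
  assume "x \<in> OL"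
  then obtain c where c: "x = (\<Sum>j<n. \<iota> (c j) * \<gamma> j)" "\<forall>j<n. c j \<in> Ov v"
    using ib unfolding is_integral_basis_def by blast
  then show "\<forall>j<n. cB x j \<in> Ov v" using coordB_unique[OF c(1)] by simp
next
  assume "\<forall>j<n. cB x j \<in> Ov v"
  then have "(\<Sum>j<n. \<iota> (cB x j) * \<gamma> j) \<in> OL" by (intro int_lincomb) (auto intro: gamma_int)
  then show "x \<in> OL" using coordB_eq(1)[of x] by simp
qed

lemma act_lin: "i < n \<Longrightarrow> K_linear_map \<iota> (act i)" using hg unfolding hopf_galois_coords_def by blast

lemma act_zero: "i < n \<Longrightarrow> act i 0 = 0"
proof -
  assume i: "i < n"
  have "act i (0 + 0) = act i 0 + act i 0" using act_lin[OF i] unfolding K_linear_map_def by blast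
  then have "act i 0 + act i 0 = act i 0 + 0" by simp
  then show ?thesis by (rule add_left_imp_eq)
qed

lemma act_sum: "i < n \<Longrightarrow> act i (\<Sum>j\<in>J. \<iota> (c j) * z j) = (\<Sum>j\<in>J. \<iota> (c j) * act i (z j))"
proof (induction J rule: infinite_finite_induct)
  case (insert x F)
  then show ?case using act_lin[OF insert(4)] unfolding K_linear_map_def by simp
qed (auto simp: act_zero)

lemma hact_sum: "ha a (\<Sum>j\<in>J. \<iota> (c j) * z j) = (\<Sum>j\<in>J. \<iota> (c j) * ha a (z j))"
proof -
  have "ha a (\<Sum>j\<in>J. \<iota> (c j) * z j) = (\<Sum>i<n. \<Sum>j\<in>J. \<iota> (a i) * (\<iota> (c j) * act i (z j)))"
    unfolding hact_def by (simp add: act_sum sum_distrib_left)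
  also have "\<dots> = (\<Sum>j\<in>J. \<Sum>i<n. \<iota> (c j) * (\<iota> (a i) * act i (z j)))"
    by (subst sum.swap) (simp add: ac_simps)
  also have "\<dots> = (\<Sum>j\<in>J. \<iota> (c j) * ha a (z j))" unfolding hact_def by (simp add: sum_distrib_left)
  finally show ?thesis .
qed

lemma coord_hact: "k < n \<Longrightarrow> cB (ha a y) k = (\<Sum>i<n. cB (act i y) k * a i)"
proof -
  assume k: "k < n"
  have "ha a y = (\<Sum>i<n. \<iota> (a i) * (\<Sum>k<n. \<iota> (cB (act i y) k) * \<gamma> k))"
    unfolding hact_def by (subst coordB_eq(1)) simp
  also have "\<dots> = (\<Sum>k<n. \<iota> (\<Sum>i<n. cB (act i y) k * a i) * \<gamma> k)" by (rule swap_sum)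
  finally show ?thesis using k by (rule coordB_unique)
qed

abbreviation "MM \<equiv> action_matrix \<iota> n \<gamma> act"
abbreviation "Mb \<equiv> beta_matrix \<iota> n \<gamma> act \<beta>"

lemma MM_carrier: "MM \<in> carrier_mat (n*n) n" unfolding action_matrix_def by simp
lemma Mb_carrier: "Mb \<in> carrier_mat n n" unfolding beta_matrix_def by simp

lemma MM_vec: "r < n * n \<Longrightarrow> (MM *\<^sub>v vec n a) $ r = cB (ha a (\<gamma> (r div n))) (r mod n)"
proof -
  assume r: "r < n * n"
  then have n0: "n > 0" by (cases n) auto
  have "(MM *\<^sub>v vec n a) $ r = (\<Sum>i\<in>{0..<n}. cB (act i (\<gamma> (r div n))) (r mod n) * a i)"
    using r unfolding action_matrix_def by (simp add: scalar_prod_def)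
  also have "\<dots> = cB (ha a (\<gamma> (r div n))) (r mod n)"
    using coord_hact[of "r mod n" a] n0 by (simp add: atLeast0LessThan)
  finally show ?thesis .
qed

lemma Mb_vec: "k < n \<Longrightarrow> (Mb *\<^sub>v vec n a) $ k = cB (ha a \<beta>) k"
proof -
  assume k: "k < n"
  have "(Mb *\<^sub>v vec n a) $ k = (\<Sum>i\<in>{0..<n}. cB (act i \<beta>) k * a i)"
    using k unfolding beta_matrix_def by (simp add: scalar_prod_def)
  also have "\<dots> = cB (ha a \<beta>) k" using coord_hact[OF k, of a] by (simp add: atLeast0LessThan)
  finally show ?thesis .
qed

lemma rdiv: "j < n \<Longrightarrow> k < n \<Longrightarrow> (n * j + k) div n = j \<and> (n * j + k) mod n = k \<and> n * j + k < n * n"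
proof -
  assume jk: "j < n" "k < n"
  have "n * j + k < n * j + n" using jk by simp
  also have "\<dots> = n * Suc j" by simp
  also have "\<dots> \<le> n * n" using jk by (intro mult_le_mono2) simp
  finally show ?thesis using jk by simp
qed

lemma ha_gamma_OL: "(\<forall>r<n*n. (MM *\<^sub>v vec n a) $ r \<in> Ov v) \<Longrightarrow> j < n \<Longrightarrow> ha a (\<gamma> j) \<in> OL"
  unfolding OL_iff using MM_vec rdiv by metis

lemma AH_iff: "a \<in> assoc_order v \<iota> n act \<longleftrightarrow> (\<forall>i\<ge>n. a i = 0) \<and> (\<forall>r<n*n. (MM *\<^sub>v vec n a) $ r \<in> Ov v)"
proof
  assume a: "a \<in> assoc_order v \<iota> n act"
  have "(MM *\<^sub>v vec n a) $ r \<in> Ov v" if r: "r < n * n" for r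
  proof -
    have n0: "n > 0" using r by (cases n) auto
    have "r div n < n" using r by (simp add: less_mult_imp_div_less)
    then have "ha a (\<gamma> (r div n)) \<in> OL" using a gamma_int unfolding assoc_order_def by blast
    then show ?thesis unfolding MM_vec[OF r] OL_iff using n0 by simp
  qed
  then show "(\<forall>i\<ge>n. a i = 0) \<and> (\<forall>r<n*n. (MM *\<^sub>v vec n a) $ r \<in> Ov v)"
    using a unfolding assoc_order_def by blast
next
  assume a: "(\<forall>i\<ge>n. a i = 0) \<and> (\<forall>r<n*n. (MM *\<^sub>v vec n a) $ r \<in> Ov v)"
  have "ha a x \<in> OL" if x: "x \<in> OL" for x
  proof -
    have cx: "\<forall>j<n. cB x j \<in> Ov v" using x OL_iff by blast
    have "ha a x = (\<Sum>j<n. \<iota> (cB x j) * ha a (\<gamma> j))" by (subst coordB_eq(1)) (rule hact_sum)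
    also have "\<dots> \<in> OL" by (intro int_lincomb) (use cx a ha_gamma_OL in auto)
    finally show ?thesis .
  qed
  then show "a \<in> assoc_order v \<iota> n act" using a unfolding assoc_order_def by blast
qed

lemma MM_inj: assumes w: "w \<in> carrier_vec n" "MM *\<^sub>v w = 0\<^sub>v (n*n)" shows "w = 0\<^sub>v n"
proof -
  define a where "a i = (if i < n then w $ i else 0)" for i
  have va: "vec n a = w" using w unfolding a_def by (intro eq_vecI) auto
  have g0: "ha a (\<gamma> j) = 0" if j: "j < n" for j
  proof -
    have "cB (ha a (\<gamma> j)) k = 0" if k: "k < n" for k
      using MM_vec[of "n*j+k" a] rdiv[OF j k] w va by simp
    then show ?thesis using coordB_eq(1)[of "ha a (\<gamma> j)"] by simp
  qed
  have h0: "ha a y = 0" for y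
    by (subst coordB_eq(1)[of y], subst hact_sum) (simp add: g0)
  have bij: "bij_betw (\<lambda>x. \<lambda>y. \<Sum>i<n. x i * act i y) {x. \<forall>i\<ge>n. x i = 0} {f. K_linear_map \<iota> f}"
    using hg unfolding hopf_galois_coords_def by blast
  have "(\<lambda>i. \<iota> (a i)) = (\<lambda>i. 0)"
  proof (rule inj_onD[OF bij_betw_imp_inj_on[OF bij]])
    show "(\<lambda>y. \<Sum>i<n. \<iota> (a i) * act i y) = (\<lambda>y. \<Sum>i<n. 0 * act i y)"
      using h0 unfolding hact_def by simp
  qed (auto simp: a_def)
  then have "\<forall>i. a i = 0" by (metis i_inj)
  then show ?thesis using va by auto
qed

end



lemma ereal_add_fin_eq: "(a::ereal) + ereal z = ereal z \<longleftrightarrow> a = 0"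
  by (cases a) auto

lemma ereal_nonneg_sum0: "(a::ereal) \<ge> 0 \<Longrightarrow> b \<ge> 0 \<Longrightarrow> a + b = 0 \<Longrightarrow> a = 0"
  by (cases a; cases b) auto

context main_setup begin

lemma intvec_mult:
  assumes "A \<in> carrier_mat m k" "entries_in A (Ov v)" "x \<in> carrier_vec k" "\<forall>i<k. x $ i \<in> Ov v" "i < m"
  shows "(A *\<^sub>v x) $ i \<in> Ov v"
proof -
  have "(A *\<^sub>v x) $ i = (\<Sum>j\<in>{0..<k}. A $$ (i,j) * x $ j)" using assms by (simp add: scalar_prod_def)
  also have "\<dots> \<in> Ov v" using assms unfolding entries_in_def by (intro Osum Omult) auto
  finally show ?thesis .
qed

lemma n_le: "n \<le> n * n" by (cases n) auto

lemma app_vec: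
  assumes D: "D \<in> carrier_mat n n" and w: "w \<in> carrier_vec n" and i: "i < n * n"
  shows "((D @\<^sub>r 0\<^sub>m (n*n - n) n) *\<^sub>v w) $ i = (if i < n then (D *\<^sub>v w) $ i else 0)"
proof -
  have c: "D @\<^sub>r 0\<^sub>m (n*n - n) n \<in> carrier_mat (n + (n*n - n)) n" using D by (intro carrier_append_rows) auto
  have i': "i < n + (n*n - n)" using i n_le by simp
  have "((D @\<^sub>r 0\<^sub>m (n*n - n) n) *\<^sub>v w) $ i = (\<Sum>j\<in>{0..<n}. (D @\<^sub>r 0\<^sub>m (n*n - n) n) $$ (i,j) * w $ j)"
    using c w i' by (simp add: scalar_prod_def)
  also have "\<dots> = (\<Sum>j\<in>{0..<n}. (if i < n then D $$ (i,j) else 0) * w $ j)"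
    using D i' by (intro sum.cong refl) (auto simp: append_rows_def)
  also have "\<dots> = (if i < n then (D *\<^sub>v w) $ i else 0)" using D w by (simp add: scalar_prod_def)
  finally show ?thesis .
qed

lemma red_exists: "\<exists>D. is_reduced_matrix v n MM D"
proof -
  obtain U where U: "GL_over (n*n) (Ov v) U" "\<forall>i j. n \<le> i \<longrightarrow> i < n*n \<longrightarrow> j < n \<longrightarrow> (U * MM) $$ (i,j) = 0"
    using elim_exists[OF dv MM_carrier] by blast
  obtain V where V: "U \<in> carrier_mat (n*n) (n*n)" "V \<in> carrier_mat (n*n) (n*n)" "V * U = 1\<^sub>m (n*n)"
    using U(1) unfolding GL_over_def by blast
  have UMc: "U * MM \<in> carrier_mat (n*n) n" using V MM_carrier by simp
  define D where "D = mat n n (\<lambda>(i,j). (U * MM) $$ (i,j))"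
  have Dc: "D \<in> carrier_mat n n" unfolding D_def by simp
  have eq: "U * MM = D @\<^sub>r 0\<^sub>m (n*n - n) n"
  proof (rule eq_matI)
    fix i j assume ij: "i < dim_row (D @\<^sub>r 0\<^sub>m (n*n - n) n)" "j < dim_col (D @\<^sub>r 0\<^sub>m (n*n - n) n)"
    then have ij': "i < n*n" "j < n" using Dc n_le by (auto simp: append_rows_def)
    show "(U * MM) $$ (i,j) = (D @\<^sub>r 0\<^sub>m (n*n - n) n) $$ (i,j)"
      using ij' U(2) Dc n_le by (auto simp: append_rows_def D_def)
  qed (use UMc Dc n_le in \<open>auto simp: append_rows_def\<close>)
  have "det D \<noteq> 0"
  proof
    assume "det D = 0"
    then obtain w where w: "w \<in> carrier_vec n" "w \<noteq> 0\<^sub>v n" "D *\<^sub>v w = 0\<^sub>v n"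
      using det_0_iff_vec_prod_zero_field[OF Dc] by auto
    have UMw: "(U * MM) *\<^sub>v w = 0\<^sub>v (n*n)"
    proof (rule eq_vecI)
      fix i assume "i < dim_vec (0\<^sub>v (n*n) :: 'k vec)"
      then have i: "i < n*n" by simp
      show "((U * MM) *\<^sub>v w) $ i = 0\<^sub>v (n*n) $ i"
        unfolding eq app_vec[OF Dc w(1) i] using w i by simp
    qed (use UMc V(1) in simp)
    have "MM *\<^sub>v w = (V * U) *\<^sub>v (MM *\<^sub>v w)" unfolding V(3) using MM_carrier w by simp
    also have "\<dots> = V *\<^sub>v (U *\<^sub>v (MM *\<^sub>v w))"
      by (rule assoc_mult_mat_vec[OF V(2) V(1)]) (use MM_carrier w in simp)
    also have "U *\<^sub>v (MM *\<^sub>v w) = (U * MM) *\<^sub>v w"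
      by (rule assoc_mult_mat_vec[symmetric, OF V(1) MM_carrier w(1)])
    also have "\<dots> = 0\<^sub>v (n*n)" by (rule UMw)
    also have "V *\<^sub>v 0\<^sub>v (n*n) = 0\<^sub>v (n*n)" using V(2) by (intro eq_vecI) auto
    finally have "w = 0\<^sub>v n" by (rule MM_inj[OF w(1)])
    then show False using w by simp
  qed
  then show ?thesis unfolding is_reduced_matrix_def using Dc U(1) eq by blast
qed

end



context main_setup begin

lemma adj_entries:
  assumes X: "X \<in> carrier_mat n n" "entries_in X (Ov v)"
  shows "entries_in (adj_mat X) (Ov v)"
  unfolding entries_in_def
proof (intro allI impI)
  fix i j assume ij: "i < dim_row (adj_mat X)" "j < dim_col (adj_mat X)"
  then have ij': "i < n" "j < n" using adj_mat(1)[OF X(1)] by auto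
  have "det (mat_delete X j i) \<in> Ov v"
  proof (rule det_in_subring)
    fix a b assume ab: "a < dim_row (mat_delete X j i)" "b < dim_col (mat_delete X j i)"
    then have "(if a < j then a else Suc a) < n" "(if b < i then b else Suc b) < n" using X(1) by auto
    then show "mat_delete X j i $$ (a,b) \<in> Ov v"
      using ab X unfolding mat_delete_def entries_in_def by auto
  qed (auto simp: O0 O1 intro: Oadd Omult Ouminus)
  moreover have "(-1::'k)^(j+i) \<in> Ov v" by (intro O_power[OF dv] Ouminus O1)
  ultimately show "adj_mat X $$ (i,j) \<in> Ov v"
    using ij' X(1) unfolding adj_mat_def cofactor_def by (auto intro: Omult)
qed

lemma det_int: "X \<in> carrier_mat n n \<Longrightarrow> entries_in X (Ov v) \<Longrightarrow> det X \<in> Ov v"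
  by (rule det_in_subring) (auto simp: O0 O1 entries_in_def intro: Oadd Omult Ouminus)

lemma main_equiv:
  "bij_betw (\<lambda>a. ha a \<beta>) (assoc_order v \<iota> n act) OL \<longleftrightarrow> v (det Mb) = index_IW v n MM"
proof -
  define D where "D = (SOME D. is_reduced_matrix v n MM D)"
  have red: "is_reduced_matrix v n MM D" unfolding D_def using red_exists by (rule someI_ex)
  have idx: "index_IW v n MM = v (det D)" unfolding index_IW_def D_def ..
  obtain U V where Dc: "D \<in> carrier_mat n n" and dD: "det D \<noteq> 0"
    and U: "U \<in> carrier_mat (n*n) (n*n)" "entries_in U (Ov v)" and V: "V \<in> carrier_mat (n*n) (n*n)"
    "entries_in V (Ov v)" "V * U = 1\<^sub>m (n*n)" and UM: "U * MM = D @\<^sub>r 0\<^sub>m (n*n - n) n"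
    using red unfolding is_reduced_matrix_def GL_over_def by blast
  have KD: "(\<forall>r<n*n. (MM *\<^sub>v w) $ r \<in> Ov v) \<longleftrightarrow> (\<forall>i<n. (D *\<^sub>v w) $ i \<in> Ov v)"
    if w: "w \<in> carrier_vec n" for w
  proof -
    have UMw: "U *\<^sub>v (MM *\<^sub>v w) = (D @\<^sub>r 0\<^sub>m (n*n - n) n) *\<^sub>v w"
      unfolding UM[symmetric] by (rule assoc_mult_mat_vec[symmetric, OF U(1) MM_carrier w])
    have MWc: "MM *\<^sub>v w \<in> carrier_vec (n*n)" using MM_carrier w by simp
    show ?thesis
    proof
      assume h: "\<forall>r<n*n. (MM *\<^sub>v w) $ r \<in> Ov v"
      show "\<forall>i<n. (D *\<^sub>v w) $ i \<in> Ov v"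
      proof (intro allI impI)
        fix i assume i: "i < n"
        have i': "i < n*n" using less_le_trans[OF i n_le] .
        have "(U *\<^sub>v (MM *\<^sub>v w)) $ i \<in> Ov v" by (rule intvec_mult[OF U MWc h i'])
        then show "(D *\<^sub>v w) $ i \<in> Ov v" unfolding UMw app_vec[OF Dc w i'] using i by simp
      qed
    next
      assume h: "\<forall>i<n. (D *\<^sub>v w) $ i \<in> Ov v"
      have h2: "\<forall>r<n*n. (U *\<^sub>v (MM *\<^sub>v w)) $ r \<in> Ov v"
        unfolding UMw using app_vec[OF Dc w] h O0 by auto
      have "MM *\<^sub>v w = (V * U) *\<^sub>v (MM *\<^sub>v w)" unfolding V(3) using MWc by simp
      also have "\<dots> = V *\<^sub>v (U *\<^sub>v (MM *\<^sub>v w))" by (rule assoc_mult_mat_vec[OF V(1) U(1) MWc])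
      finally show "\<forall>r<n*n. (MM *\<^sub>v w) $ r \<in> Ov v"
        using intvec_mult[OF V(1,2) _ h2] U(1) MWc by simp
    qed
  qed
  define Dinv where "Dinv = inverse (det D) \<cdot>\<^sub>m adj_mat D"
  have Di: "D * Dinv = 1\<^sub>m n" "Dinv * D = 1\<^sub>m n" "Dinv \<in> carrier_mat n n"
    unfolding Dinv_def using adj_inv[OF Dc dD] by auto
  define X where "X = Mb * Dinv"
  have Xc: "X \<in> carrier_mat n n" unfolding X_def using Mb_carrier Di(3) by simp
  define az where "az z = (\<lambda>i. if i < n then (Dinv *\<^sub>v z) $ i else 0)" for z
  have vaz: "z \<in> carrier_vec n \<Longrightarrow> vec n (az z) = Dinv *\<^sub>v z" for z
    unfolding az_def using Di(3) by (intro eq_vecI) auto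
  have DDz: "z \<in> carrier_vec n \<Longrightarrow> D *\<^sub>v (Dinv *\<^sub>v z) = z" for z
    using Dc Di by (simp add: assoc_mult_mat_vec[symmetric, of _ n n])
  have claim1: "az z \<in> assoc_order v \<iota> n act" if z: "z \<in> carrier_vec n" "\<forall>i<n. z $ i \<in> Ov v" for z
  proof -
    have "\<forall>r<n*n. (MM *\<^sub>v vec n (az z)) $ r \<in> Ov v"
      unfolding vaz[OF z(1)] using KD[of "Dinv *\<^sub>v z"] Di(3) z DDz[OF z(1)] by simp
    then show ?thesis unfolding AH_iff by (simp add: az_def)
  qed
  have claim2: "cB (ha (az z) \<beta>) k = (X *\<^sub>v z) $ k" if z: "z \<in> carrier_vec n" and k: "k < n" for z k
  proof -
    have "cB (ha (az z) \<beta>) k = (Mb *\<^sub>v (Dinv *\<^sub>v z)) $ k"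
      unfolding vaz[OF z, symmetric] by (rule Mb_vec[OF k, symmetric])
    also have "Mb *\<^sub>v (Dinv *\<^sub>v z) = X *\<^sub>v z" unfolding X_def
      by (rule assoc_mult_mat_vec[symmetric, OF Mb_carrier Di(3) z])
    finally show ?thesis .
  qed
  have Xint: "entries_in X (Ov v)" unfolding entries_in_def
  proof (intro allI impI)
    fix k l assume kl: "k < dim_row X" "l < dim_col X"
    then have kl': "k < n" "l < n" using Xc by auto
    have uz: "unit_vec n l \<in> carrier_vec n" "\<forall>i<n. unit_vec n l $ i \<in> Ov v"
      using O0 O1 by (auto simp: unit_vec_def)
    have "ha (az (unit_vec n l)) \<beta> \<in> OL" using claim1[OF uz] beta unfolding assoc_order_def by blast
    then have "cB (ha (az (unit_vec n l)) \<beta>) k \<in> Ov v" using kl' OL_iff by blast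
    moreover have "(X *\<^sub>v unit_vec n l) $ k = X $$ (k,l)" using Xc kl' by simp
    ultimately show "X $$ (k,l) \<in> Ov v" using claim2[OF uz(1) kl'(1)] by simp
  qed
  have XD: "X * D = Mb" unfolding X_def using Mb_carrier Di Dc by simp
  have detMb: "det Mb = det X * det D" unfolding XD[symmetric] by (rule det_mult[OF Xc Dc])
  obtain zD where zD: "v (det D) = ereal (real_of_int zD)" using dv_int[OF dv dD] by blast
  have vMb: "v (det Mb) = v (det X) + v (det D)" unfolding detMb by (rule dv_mult[OF dv])
  have eqv: "v (det Mb) = index_IW v n MM \<longleftrightarrow> v (det X) = 0"
    unfolding idx vMb zD by (rule ereal_add_fin_eq)
  show ?thesis unfolding eqv
  proof
    assume bij: "bij_betw (\<lambda>a. ha a \<beta>) (assoc_order v \<iota> n act) OL"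
    have "\<forall>l. \<exists>a. l < n \<longrightarrow> a \<in> assoc_order v \<iota> n act \<and> ha a \<beta> = \<gamma> l"
      using bij gamma_int unfolding bij_betw_def by force
    then obtain A where A: "\<And>l. l < n \<Longrightarrow> A l \<in> assoc_order v \<iota> n act \<and> ha (A l) \<beta> = \<gamma> l"
      by metis
    define z where "z l = D *\<^sub>v vec n (A l)" for l
    have zc: "z l \<in> carrier_vec n" for l unfolding z_def using Dc by simp
    have zint: "l < n \<Longrightarrow> i < n \<Longrightarrow> z l $ i \<in> Ov v" for l i
      using A[of l] KD[of "vec n (A l)"] unfolding AH_iff z_def by auto
    have Xz: "(X *\<^sub>v z l) $ k = (if k = l then 1 else 0)" if kl: "k < n" "l < n" for k l
    proof -
      have "X *\<^sub>v z l = Mb *\<^sub>v (Dinv *\<^sub>v (D *\<^sub>v vec n (A l)))" unfolding X_def z_def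
        using Mb_carrier Di(3) Dc by (simp add: assoc_mult_mat_vec[of _ n n])
      also have "Dinv *\<^sub>v (D *\<^sub>v vec n (A l)) = vec n (A l)"
        using Dc Di by (simp add: assoc_mult_mat_vec[symmetric, of _ n n])
      finally have "(X *\<^sub>v z l) $ k = cB (ha (A l) \<beta>) k" using Mb_vec[OF kl(1)] by simp
      also have "\<dots> = cB (\<gamma> l) k" using A[OF kl(2)] by simp
      also have "\<dots> = (if k = l then 1 else 0)"
      proof (rule coordB_unique[where c="\<lambda>j. if j = l then 1 else 0", OF _ kl(1)])
        have "(\<Sum>j<n. \<iota> (if j = l then 1 else 0) * \<gamma> j) = (\<Sum>j<n. if j = l then \<gamma> j else 0)"
          by (intro sum.cong) auto
        then show "\<gamma> l = (\<Sum>j<n. \<iota> (if j = l then 1 else 0) * \<gamma> j)" using kl by simp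
      qed
      finally show ?thesis .
    qed
    define Z where "Z = mat n n (\<lambda>(i,l). z l $ i)"
    have Zc: "Z \<in> carrier_mat n n" unfolding Z_def by simp
    have XZ: "X * Z = 1\<^sub>m n"
    proof (rule eq_matI)
      fix k l assume kl: "k < dim_row (1\<^sub>m n :: 'k mat)" "l < dim_col (1\<^sub>m n :: 'k mat)"
      then have kl': "k < n" "l < n" by auto
      have "col Z l = z l" using zc[of l] kl' unfolding Z_def by (intro eq_vecI) auto
      then have "(X * Z) $$ (k,l) = (X *\<^sub>v z l) $ k" using Xc Zc kl' by simp
      then show "(X * Z) $$ (k,l) = (1\<^sub>m n :: 'k mat) $$ (k,l)" using Xz[OF kl'] kl' by simp
    qed (use Xc Zc in auto)
    have Zint: "entries_in Z (Ov v)" unfolding entries_in_def Z_def using zint by auto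
    have "det X * det Z = det (X * Z)" by (rule det_mult[OF Xc Zc, symmetric])
    also have "\<dots> = 1" unfolding XZ by (rule det_one)
    finally have "v (det X * det Z) = 0" using dv_one[OF dv] by simp
    then have h0: "v (det X) + v (det Z) = 0" unfolding dv_mult[OF dv] .
    have h1: "v (det X) \<ge> 0" using det_int[OF Xc Xint] by (rule O_iff[OF dv, THEN iffD1])
    have h2: "v (det Z) \<ge> 0" using det_int[OF Zc Zint] by (rule O_iff[OF dv, THEN iffD1])
    show "v (det X) = 0" by (rule ereal_nonneg_sum0[OF h1 h2 h0])
  next
    assume vX: "v (det X) = 0"
    have dX: "det X \<noteq> 0"
    proof
      assume "det X = 0"
      then have "v (det X) = \<infinity>" using dv_inf[OF dv] by simp
      then show False using vX by simp
    qed
    define Y where "Y = inverse (det X) \<cdot>\<^sub>m adj_mat X"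
    have Yi: "X * Y = 1\<^sub>m n" "Y * X = 1\<^sub>m n" "Y \<in> carrier_mat n n"
      unfolding Y_def using adj_inv[OF Xc dX] by auto
    have invO: "inverse (det X) \<in> Ov v" using O_inv_unit[OF dv det_int[OF Xc Xint] dX] vX by simp
    have Yint: "entries_in Y (Ov v)"
      using adj_entries[OF Xc Xint] invO adj_mat(1)[OF Xc] unfolding Y_def entries_in_def
      by (auto intro: Omult)
    have XYc: "c \<in> carrier_vec n \<Longrightarrow> X *\<^sub>v (Y *\<^sub>v c) = c" for c
      using Xc Yi by (simp add: assoc_mult_mat_vec[symmetric, of _ n n])
    have YXc: "c \<in> carrier_vec n \<Longrightarrow> Y *\<^sub>v (X *\<^sub>v c) = c" for c
      using Xc Yi by (simp add: assoc_mult_mat_vec[symmetric, of _ n n])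
    have MbXD: "w \<in> carrier_vec n \<Longrightarrow> Mb *\<^sub>v w = X *\<^sub>v (D *\<^sub>v w)" for w
      unfolding XD[symmetric] using Xc Dc by simp
    have DinvD: "w \<in> carrier_vec n \<Longrightarrow> Dinv *\<^sub>v (D *\<^sub>v w) = w" for w
      using Dc Di by (simp add: assoc_mult_mat_vec[symmetric, of _ n n])
    show "bij_betw (\<lambda>a. ha a \<beta>) (assoc_order v \<iota> n act) OL"
      unfolding bij_betw_def
    proof (intro conjI)
      show "inj_on (\<lambda>a. ha a \<beta>) (assoc_order v \<iota> n act)"
      proof (rule inj_onI)
        fix a a' assume a: "a \<in> assoc_order v \<iota> n act" "a' \<in> assoc_order v \<iota> n act"
          and eq: "ha a \<beta> = ha a' \<beta>"
        have "Mb *\<^sub>v vec n a = Mb *\<^sub>v vec n a'"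
          using Mb_vec eq Mb_carrier by (intro eq_vecI) auto
        then have "X *\<^sub>v (D *\<^sub>v vec n a) = X *\<^sub>v (D *\<^sub>v vec n a')" using MbXD by simp
        then have "Y *\<^sub>v (X *\<^sub>v (D *\<^sub>v vec n a)) = Y *\<^sub>v (X *\<^sub>v (D *\<^sub>v vec n a'))" by simp
        moreover have "D *\<^sub>v vec n a \<in> carrier_vec n" "D *\<^sub>v vec n a' \<in> carrier_vec n" using Dc by auto
        ultimately have "D *\<^sub>v vec n a = D *\<^sub>v vec n a'" using YXc by simp
        then have "Dinv *\<^sub>v (D *\<^sub>v vec n a) = Dinv *\<^sub>v (D *\<^sub>v vec n a')" by simp
        then have ve: "vec n a = vec n a'" using DinvD[of "vec n a"] DinvD[of "vec n a'"] by simp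
        show "a = a'"
        proof (rule ext)
          fix i show "a i = a' i"
          proof (cases "i < n")
            case True
            have "vec n a $ i = vec n a' $ i" using ve by simp
            then show ?thesis using True by simp
          next
            case False then show ?thesis using a unfolding assoc_order_def by simp
          qed
        qed
      qed
    next
      show "(\<lambda>a. ha a \<beta>) ` assoc_order v \<iota> n act = OL"
      proof
        show "(\<lambda>a. ha a \<beta>) ` assoc_order v \<iota> n act \<subseteq> OL" using beta unfolding assoc_order_def by blast
      next
        show "OL \<subseteq> (\<lambda>a. ha a \<beta>) ` assoc_order v \<iota> n act"
        proof
          fix y assume y: "y \<in> OL"
          define c where "c = vec n (cB y)"
          have cc: "c \<in> carrier_vec n" unfolding c_def by simp
          define z where "z = Y *\<^sub>v c"
          have zc: "z \<in> carrier_vec n" unfolding z_def using Yi(3) cc by (rule mult_mat_vec_carrier)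
          have zint: "\<forall>i<n. z $ i \<in> Ov v" unfolding z_def
            using intvec_mult[OF Yi(3) Yint cc] y OL_iff unfolding c_def by simp
          have "ha (az z) \<beta> = y"
          proof (rule coordB_inj)
            fix k assume k: "k < n"
            have "cB (ha (az z) \<beta>) k = (X *\<^sub>v z) $ k" by (rule claim2[OF zc k])
            also have "\<dots> = c $ k" unfolding z_def using XYc[OF cc] by simp
            finally show "cB (ha (az z) \<beta>) k = cB y k" using k unfolding c_def by simp
          qed
          then show "y \<in> (\<lambda>a. ha a \<beta>) ` assoc_order v \<iota> n act" using claim1[OF zc zint] by blast
        qed
      qed
    qed
  qed
qed

end


theorem mainTheorem2:
  fixes v :: "'k::field \<Rightarrow> ereal"
    and \<iota> :: "'k \<Rightarrow> 'l::field"
    and n :: nat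
    and mu :: "nat \<Rightarrow> nat \<Rightarrow> nat \<Rightarrow> 'k" and u :: "nat \<Rightarrow> 'k"
    and dl :: "nat \<Rightarrow> nat \<Rightarrow> nat \<Rightarrow> 'k" and eps :: "nat \<Rightarrow> 'k" and S :: "nat \<Rightarrow> nat \<Rightarrow> 'k"
    and act :: "nat \<Rightarrow> 'l \<Rightarrow> 'l"
    and \<gamma> :: "nat \<Rightarrow> 'l" and \<beta> :: 'l
  assumes "discrete_valuation v"
    and "K_embedding \<iota>"
    and "ext_degree_eq \<iota> n"
    and "separable_ext \<iota>"
    and "hopf_galois_coords \<iota> n mu u dl eps S act"
    and "is_integral_basis v \<iota> n \<gamma>"
    and "\<beta> \<in> int_closure v \<iota>"
  shows "bij_betw (\<lambda>a. hact \<iota> n act a \<beta>) (assoc_order v \<iota> n act) (int_closure v \<iota>)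
     \<longleftrightarrow> v (det (beta_matrix \<iota> n \<gamma> act \<beta>)) = index_IW v n (action_matrix \<iota> n \<gamma> act)"
proof -
  interpret main_setup v \<iota> n mu u dl eps S act \<gamma> \<beta>
    by (unfold_locales) (use assms in auto)
  show ?thesis by (rule main_equiv)
qed

end
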